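(* Let $G=(V,E)$ be a graph on $2n$ vertices, let $0<\epsilon<1$ and $\alpha\geq 10$, and suppose that every $S\subseteq V$ with $|S|\leq 2\epsilon n$ satisfies $|N(S)|\geq\alpha|S|$. Let $M$ be a matching of $G$ that is not perfect, and partition the set of vertices not covered by $M$ into two sets $U_L,U_R$ of equal size. Let $t=\max\left(\left\lceil\log_{\alpha/4}\frac{2\epsilon n+1}{|U_L|}\right\rceil,0\right)$. If there is no augmenting path for $M$ of length at most $4t+1$ from $U_L$ to $U_R$, then with probability greater than $1/2$ over $\omega\sim\mu_M$ there exists a set $S\subseteq L_M(\omega)$ with $|S|>2\epsilon n$ such that for every $v\in S$ there is an alternating path (for $M$) of length at most $2t$ in $G_M(\omega)$ from some vertex of $U_L$ to $v$.
   Context: $N(S)=\{u\notin S:\exists v\in S,\ (u,v)\in E\}$. Given $M$ and $\omega:M\to\{0,1\}$, the bipartite graph $G_M(\omega)=(L_M(\omega),R_M(\omega),E_M(\omega))$ is defined as follows: all vertices of $U_L$ are in $L_M(\omega)$, all vertices of $U_R$ are in $R_M(\omega)$; for each edge $e=(u,v)\in M$ (with a fixed orientation of each edge), $u\in L_M(\omega)$ and $v\in R_M(\omega)$ if $\omega(e)=0$, and $u\in R_M(\omega)$, $v\in L_M(\omega)$ otherwise; $E_M(\omega)$ consists of all edges of $E$ between $L_M(\omega)$ and $R_M(\omega)$. $\mu_M$ is the uniform distribution over all functions $M\to\{0,1\}$. A walk $v_0,\dots,v_k$ is alternating for $M$ if for each $1\leq i\leq k-1$ exactly one of $(v_{i-1},v_i),(v_i,v_{i+1})$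 is in $M$; an augmenting path is an alternating path in $G$ whose endpoints are both unmatched. Length is the number of edges. *)

theory Defs
  imports "HOL-Probability.Probability_Mass_Function" "HOL-Library.FuncSet"
begin

definition graph :: "'a set \<Rightarrow> ('a \<Rightarrow> 'a \<Rightarrow> bool) \<Rightarrow> bool" where
  "graph V E \<longleftrightarrow> finite V \<and> (\<forall>x y. E x y \<longrightarrow> x \<in> V \<and> y \<in> V)
     \<and> (\<forall>x y. E x y \<longrightarrow> E y x) \<and> (\<forall>x. \<not> E x x)"

definition nbhd :: "('a \<Rightarrow> 'a \<Rightarrow> bool) \<Rightarrow> 'a set \<Rightarrow> 'a set" where
  "nbhd E S = {u. u \<notin> S \<and> (\<exists>v\<in>S. E u v)}"

(* A matching with a fixed orientation of each edge: a set of ordered pairs (u,v),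
   each an edge of G, pairwise vertex-disjoint. *)
definition matching :: "('a \<Rightarrow> 'a \<Rightarrow> bool) \<Rightarrow> ('a \<times> 'a) set \<Rightarrow> bool" where
  "matching E M \<longleftrightarrow> (\<forall>(u,v)\<in>M. E u v) \<and>
     (\<forall>e\<in>M. \<forall>e'\<in>M. e \<noteq> e' \<longrightarrow> {fst e, snd e} \<inter> {fst e', snd e'} = {})"

definition covered :: "('a \<times> 'a) set \<Rightarrow> 'a set" where
  "covered M = fst ` M \<union> snd ` M"

definition inM :: "('a \<times> 'a) set \<Rightarrow> 'a \<Rightarrow> 'a \<Rightarrow> bool" where
  "inM M x y \<longleftrightarrow> (x, y) \<in> M \<or> (y, x) \<in> M"

definition walk_in :: "('a \<Rightarrow> 'a \<Rightarrow> bool) \<Rightarrow> 'a list \<Rightarrow> bool" where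
  "walk_in H xs \<longleftrightarrow> xs \<noteq> [] \<and> (\<forall>i. i + 1 < length xs \<longrightarrow> H (xs ! i) (xs ! (i + 1)))"

definition path_in :: "('a \<Rightarrow> 'a \<Rightarrow> bool) \<Rightarrow> 'a list \<Rightarrow> bool" where
  "path_in H xs \<longleftrightarrow> walk_in H xs \<and> distinct xs"

definition walk_length :: "'a list \<Rightarrow> nat" where
  "walk_length xs = length xs - 1"

definition alternating :: "('a \<times> 'a) set \<Rightarrow> 'a list \<Rightarrow> bool" where
  "alternating M xs \<longleftrightarrow> (\<forall>i. 1 \<le> i \<and> i + 1 < length xs \<longrightarrow>
      (inM M (xs ! (i - 1)) (xs ! i) \<noteq> inM M (xs ! i) (xs ! (i + 1))))"

definition augmenting_path :: "('a \<Rightarrow> 'a \<Rightarrow> bool) \<Rightarrow> ('a \<times> 'a) set \<Rightarrow> 'a list \<Rightarrow> bool" where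
  "augmenting_path E M xs \<longleftrightarrow> path_in E xs \<and> alternating M xs
     \<and> hd xs \<notin> covered M \<and> last xs \<notin> covered M"

(* omega : M \<rightarrow> {0,1}, encoded with False = 0, True = 1 *)
definition L_M :: "'a set \<Rightarrow> ('a \<times> 'a) set \<Rightarrow> (('a \<times> 'a) \<Rightarrow> bool) \<Rightarrow> 'a set" where
  "L_M UL M \<omega> = UL \<union> {u. \<exists>v. (u, v) \<in> M \<and> \<not> \<omega> (u, v)} \<union> {v. \<exists>u. (u, v) \<in> M \<and> \<omega> (u, v)}"

definition R_M :: "'a set \<Rightarrow> ('a \<times> 'a) set \<Rightarrow> (('a \<times> 'a) \<Rightarrow> bool) \<Rightarrow> 'a set" where
  "R_M UR M \<omega> = UR \<union> {v. \<exists>u. (u, v) \<in> M \<and> \<not> \<omega> (u, v)} \<union> {u. \<exists>v. (u, v) \<in> M \<and> \<omega> (u, v)}"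

definition E_M :: "('a \<Rightarrow> 'a \<Rightarrow> bool) \<Rightarrow> 'a set \<Rightarrow> 'a set \<Rightarrow> ('a \<times> 'a) set
    \<Rightarrow> (('a \<times> 'a) \<Rightarrow> bool) \<Rightarrow> 'a \<Rightarrow> 'a \<Rightarrow> bool" where
  "E_M E UL UR M \<omega> x y \<longleftrightarrow> E x y \<and>
     ((x \<in> L_M UL M \<omega> \<and> y \<in> R_M UR M \<omega>) \<or> (x \<in> R_M UR M \<omega> \<and> y \<in> L_M UL M \<omega>))"

definition mu_M :: "('a \<times> 'a) set \<Rightarrow> (('a \<times> 'a) \<Rightarrow> bool) pmf" where
  "mu_M M = pmf_of_set (M \<rightarrow>\<^sub>E (UNIV :: bool set))"

end

theory Submission
  imports Defs
begin


lemma tail_bound: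
  fixes B :: "'e set" and h :: nat
  assumes fin: "finite B"
  shows "real (card {T. T \<subseteq> B \<and> 4 * card T + h < card B}) \<le> (337/384) ^ (card B + h) * 2 ^ card B"
proof -
  let ?b = "card B"
  let ?w = "\<lambda>T::'e set. (4/3::real) ^ ?b * (3/4) ^ h * (81/256) ^ card T"
  have "real (card {T. T \<subseteq> B \<and> 4 * card T + h < card B}) = (\<Sum>T\<in>Pow B. if 4 * card T + h < ?b then 1 else 0)"
  proof -
    have e: "Pow B \<inter> {T. 4 * card T + h < card B} = {T. T \<subseteq> B \<and> 4 * card T + h < card B}" by auto
    show ?thesis using fin by (simp add: sum.If_cases e)
  qed
  also have "\<dots> \<le> (\<Sum>T\<in>Pow B. ?w T)"
  proof (rule sum_mono)
    fix T assume T: "T \<in> Pow B"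
    show "(if 4 * card T + h < ?b then 1 else 0) \<le> ?w T"
    proof (cases "4 * card T + h < ?b")
      case True
      have "(81/256::real) ^ card T = (3/4) ^ (4 * card T)"
        by (simp add: power_mult power_divide)
      then have "?w T = (4/3) ^ ?b * (3/4) ^ (h + 4 * card T)"
        by (simp add: power_add)
      also have "(3/4::real) ^ (h + 4 * card T) \<ge> (3/4) ^ ?b"
        using True by (intro power_decreasing) auto
      then have "(4/3::real) ^ ?b * (3/4) ^ (h + 4 * card T) \<ge> (4/3) ^ ?b * (3/4) ^ ?b"
        by (intro mult_left_mono) auto
      moreover have "(4/3::real) ^ ?b * (3/4) ^ ?b = 1"
        by (simp add: power_mult_distrib[symmetric])
      ultimately show ?thesis using True
        by (metis \<open>?w T = (4 / 3) ^ card B * (3 / 4) ^ (h + 4 * card T)\<close>)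
    next
      case False then show ?thesis by simp
    qed
  qed
  also have "\<dots> = (4/3) ^ ?b * (3/4) ^ h * (\<Sum>T\<in>Pow B. (81/256) ^ card T)"
    by (simp add: sum_distrib_left)
  also have "(\<Sum>T\<in>Pow B. (81/256::real) ^ card T) = (1 + 81/256) ^ ?b"
  proof -
    have "(\<Prod>x\<in>B. (81/256::real) + 1) = (\<Sum>X\<in>Pow B. (\<Prod>x\<in>X. 81/256) * (\<Prod>x\<in>B-X. 1))"
      by (rule prod_add[OF fin])
    then show ?thesis by (simp add: add.commute)
  qed
  also have "(4/3::real) ^ ?b * (3/4) ^ h * (1 + 81/256) ^ ?b = (337/384) ^ ?b * 2 ^ ?b * (3/4) ^ h"
    by (simp add: power_mult_distrib[symmetric])
  also have "\<dots> \<le> (337/384) ^ ?b * 2 ^ ?b * (337/384) ^ h"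
    by (intro mult_left_mono power_mono) auto
  also have "\<dots> = (337/384) ^ (?b + h) * 2 ^ ?b"
    by (simp add: power_add)
  finally show ?thesis .
qed

definition flipf :: "'e set \<Rightarrow> ('e \<Rightarrow> bool) \<Rightarrow> 'e \<Rightarrow> bool" where
  "flipf U \<omega> = (\<lambda>e. if e \<in> U then \<not> \<omega> e else \<omega> e)"

lemma class_bound:
  fixes M D B :: "'e set" and c :: "'e \<Rightarrow> bool" and P :: "nat \<Rightarrow> bool" and \<omega>0 :: "'e \<Rightarrow> bool"
  assumes fin: "finite M" and BM: "B \<subseteq> M" and BD: "B \<inter> D = {}"
  and tail: "real (card {T. T \<subseteq> B \<and> P (card T)}) \<le> p * 2 ^ card B"
  shows "real (card {\<omega>\<in>{\<omega> \<in> M \<rightarrow>\<^sub>E (UNIV::bool set). \<forall>e\<in>D. \<omega> e = \<omega>0 e}. P (card {e\<in>B. \<omega> e = c e})})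
     \<le> p * card {\<omega> \<in> M \<rightarrow>\<^sub>E (UNIV::bool set). \<forall>e\<in>D. \<omega> e = \<omega>0 e}"
proof -
  define Cl where "Cl = {\<omega> \<in> M \<rightarrow>\<^sub>E (UNIV::bool set). \<forall>e\<in>D. \<omega> e = \<omega>0 e}"
  define \<phi> where "\<phi> \<omega> = {e\<in>B. \<omega> e = c e}" for \<omega> :: "'e \<Rightarrow> bool"
  define fib where "fib T = {\<omega>\<in>Cl. \<phi> \<omega> = T}" for T
  have finB: "finite B" using fin BM finite_subset by blast
  have finCl: "finite Cl" unfolding Cl_def by (rule finite_subset[OF _ finite_PiE[OF fin]]) auto
  have flip_in: "flipf T \<omega> \<in> Cl" if "T \<subseteq> B" "\<omega> \<in> Cl" for T \<omega>
    using that BM BD unfolding Cl_def flipf_def PiE_def extensional_def by auto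
  have flip_flip: "flipf T (flipf T \<omega>) = \<omega>" for T \<omega>
    unfolding flipf_def by auto
  have phi_flip: "\<phi> (flipf T \<omega>) = T" if "T \<subseteq> B" "\<phi> \<omega> = {}" for T \<omega>
    using that unfolding \<phi>_def flipf_def by auto
  have phi_flip2: "\<phi> (flipf T \<omega>) = {}" if "T \<subseteq> B" "\<phi> \<omega> = T" for T \<omega>
    using that unfolding \<phi>_def flipf_def by auto
  have cfib: "card (fib T) = card (fib {})" if T: "T \<subseteq> B" for T
  proof -
    have "bij_betw (flipf T) (fib {}) (fib T)"
    proof (rule bij_betw_byWitness[where f'="flipf T"])
      show "\<forall>a\<in>fib {}. flipf T (flipf T a) = a" by (simp add: flip_flip)
      show "\<forall>a\<in>fib T. flipf T (flipf T a) = a" by (simp add: flip_flip)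
      show "flipf T ` fib {} \<subseteq> fib T" using flip_in phi_flip T unfolding fib_def by blast
      show "flipf T ` fib T \<subseteq> fib {}" using flip_in phi_flip2 T unfolding fib_def by blast
    qed
    then show ?thesis by (metis bij_betw_same_card)
  qed
  have fin_fib: "finite (fib T)" for T unfolding fib_def using finCl by auto
  have disj: "fib i \<inter> fib j = {}" if "i \<noteq> j" for i j using that unfolding fib_def by auto
  have sub: "\<phi> \<omega> \<subseteq> B" for \<omega> unfolding \<phi>_def by auto
  have disjI: "\<forall>i\<in>I. \<forall>j\<in>I. i \<noteq> j \<longrightarrow> fib i \<inter> fib j = {}" for I
  proof (intro ballI impI)
    fix i j :: "'e set" assume "i \<noteq> j" then show "fib i \<inter> fib j = {}" by (rule disj)
  qed
  have finP: "finite {T. T \<subseteq> B \<and> P (card T)}"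
    by (rule finite_subset[of _ "Pow B"]) (auto simp: finB)
  have e1: "Cl = (\<Union>T\<in>Pow B. fib T)" unfolding fib_def using sub by auto
  have e2: "{\<omega>\<in>Cl. P (card (\<phi> \<omega>))} = (\<Union>T\<in>{T. T \<subseteq> B \<and> P (card T)}. fib T)"
    unfolding fib_def using sub by auto
  have "card Cl = (\<Sum>T\<in>Pow B. card (fib T))"
    unfolding e1 apply (rule card_UN_disjoint)
    using finB apply simp
     using fin_fib apply blast
    using disj by blast
  also have "\<dots> = (\<Sum>T\<in>Pow B. card (fib {}))" by (rule sum.cong[OF refl], rule cfib, simp)
  finally have c1: "card Cl = 2 ^ card B * card (fib {})" using finB by (simp add: card_Pow)
  have "card {\<omega>\<in>Cl. P (card (\<phi> \<omega>))} = (\<Sum>T\<in>{T. T \<subseteq> B \<and> P (card T)}. card (fib T))"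
    unfolding e2 apply (rule card_UN_disjoint)
    using finB apply simp
     using fin_fib apply blast
    using disj by blast
  also have "\<dots> = (\<Sum>T\<in>{T. T \<subseteq> B \<and> P (card T)}. card (fib {}))" by (rule sum.cong[OF refl], rule cfib, simp)
  finally have c2: "card {\<omega>\<in>Cl. P (card (\<phi> \<omega>))} = card {T. T \<subseteq> B \<and> P (card T)} * card (fib {})"
    by simp
  have "real (card {\<omega>\<in>Cl. P (card (\<phi> \<omega>))}) \<le> p * 2 ^ card B * card (fib {})"
  proof -
    have "real (card {T. T \<subseteq> B \<and> P (card T)}) * real (card (fib {})) \<le> p * 2 ^ card B * real (card (fib {}))"
      by (rule mult_right_mono[OF tail]) simp
    then show ?thesis unfolding c2 by simp
  qed
  also have "\<dots> = p * card Cl" unfolding c1 by simp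
  finally show ?thesis unfolding Cl_def \<phi>_def .
qed

lemma exposure:
  fixes M :: "'e set" and D B :: "('e \<Rightarrow> bool) \<Rightarrow> 'e set" and c :: "('e\<Rightarrow>bool) \<Rightarrow> 'e \<Rightarrow> bool"
   and P :: "('e\<Rightarrow>bool) \<Rightarrow> nat \<Rightarrow> bool" and Q :: "('e\<Rightarrow>bool) \<Rightarrow> bool"
  assumes fin: "finite M"
   and DB: "\<And>\<omega>. \<omega> \<in> M \<rightarrow>\<^sub>E (UNIV::bool set) \<Longrightarrow> B \<omega> \<subseteq> M \<and> B \<omega> \<inter> D \<omega> = {}"
   and det: "\<And>\<omega> \<omega>'. \<omega> \<in> M \<rightarrow>\<^sub>E (UNIV::bool set) \<Longrightarrow> \<omega>' \<in> M \<rightarrow>\<^sub>E (UNIV::bool set) \<Longrightarrow> (\<forall>e\<in>D \<omega>. \<omega>' e = \<omega> e) \<Longrightarrow>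
        D \<omega>' = D \<omega> \<and> B \<omega>' = B \<omega> \<and> c \<omega>' = c \<omega> \<and> P \<omega>' = P \<omega> \<and> Q \<omega>' = Q \<omega>"
   and tail: "\<And>\<omega>. \<omega> \<in> M \<rightarrow>\<^sub>E (UNIV::bool set) \<Longrightarrow> Q \<omega> \<Longrightarrow> real (card {T. T \<subseteq> B \<omega> \<and> P \<omega> (card T)}) \<le> p * 2 ^ card (B \<omega>)"
   and p: "p \<ge> 0"
  shows "real (card {\<omega>\<in>M \<rightarrow>\<^sub>E (UNIV::bool set). Q \<omega> \<and> P \<omega> (card {e\<in>B \<omega>. \<omega> e = c \<omega> e})}) \<le> p * card (M \<rightarrow>\<^sub>E (UNIV::bool set))"
proof -
  define \<Omega> where "\<Omega> = M \<rightarrow>\<^sub>E (UNIV::bool set)"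
  define C where "C \<omega> = {\<omega>'\<in>\<Omega>. \<forall>e\<in>D \<omega>. \<omega>' e = \<omega> e}" for \<omega>
  define A where "A = {\<omega>\<in>\<Omega>. Q \<omega> \<and> P \<omega> (card {e\<in>B \<omega>. \<omega> e = c \<omega> e})}"
  have finO: "finite \<Omega>" unfolding \<Omega>_def using fin by (auto intro: finite_PiE)
  have CO: "C \<omega> \<subseteq> \<Omega>" for \<omega> unfolding C_def by auto
  have finC: "finite (C \<omega>)" for \<omega> using finO CO finite_subset by blast
  have memC: "\<omega> \<in> C \<omega>" if "\<omega> \<in> \<Omega>" for \<omega> using that unfolding C_def by auto
  have symC: "C \<omega>' = C \<omega>" if "\<omega> \<in> \<Omega>" "\<omega>' \<in> C \<omega>" for \<omega> \<omega>'
  proof -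
    have o': "\<omega>' \<in> \<Omega>" "\<forall>e\<in>D \<omega>. \<omega>' e = \<omega> e" using that unfolding C_def by auto
    then have "D \<omega>' = D \<omega>" using det that unfolding \<Omega>_def by blast
    then show ?thesis using o' unfolding C_def by auto
  qed
  have Cpos: "card (C \<omega>) > 0" if "\<omega> \<in> \<Omega>" for \<omega> using memC[OF that] finC card_gt_0_iff by blast
  have AO: "A \<subseteq> \<Omega>" unfolding A_def by auto
  have finA: "finite A" using finite_subset[OF AO finO] .
  have swapset: "{\<omega>\<in>\<Omega>. \<omega>' \<in> C \<omega>} = C \<omega>'" if "\<omega>' \<in> \<Omega>" for \<omega>'
  proof
    show "{\<omega> \<in> \<Omega>. \<omega>' \<in> C \<omega>} \<subseteq> C \<omega>'" using symC memC by blast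
    show "C \<omega>' \<subseteq> {\<omega> \<in> \<Omega>. \<omega>' \<in> C \<omega>}" using symC memC that CO by blast
  qed
  have "(\<Sum>\<omega>\<in>\<Omega>. real (card (A \<inter> C \<omega>)) / card (C \<omega>)) = (\<Sum>\<omega>\<in>\<Omega>. \<Sum>\<omega>'\<in>{\<omega>'\<in>A. \<omega>' \<in> C \<omega>}. 1 / card (C \<omega>'))"
  proof (rule sum.cong)
    fix \<omega> assume o: "\<omega> \<in> \<Omega>"
    have "(\<Sum>\<omega>'\<in>{\<omega>'\<in>A. \<omega>' \<in> C \<omega>}. 1 / real (card (C \<omega>'))) = (\<Sum>\<omega>'\<in>{\<omega>'\<in>A. \<omega>' \<in> C \<omega>}. 1 / real (card (C \<omega>)))"
      using symC[OF o] by (intro sum.cong) auto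
    also have "\<dots> = real (card (A \<inter> C \<omega>)) / card (C \<omega>)"
      by (simp add: Int_def)
    finally show "real (card (A \<inter> C \<omega>)) / card (C \<omega>) = (\<Sum>\<omega>'\<in>{\<omega>'\<in>A. \<omega>' \<in> C \<omega>}. 1 / card (C \<omega>'))" by simp
  qed simp
  also have "\<dots> = (\<Sum>\<omega>'\<in>A. \<Sum>\<omega>\<in>{\<omega>\<in>\<Omega>. \<omega>' \<in> C \<omega>}. 1 / card (C \<omega>'))"
    by (rule sum.swap_restrict[OF finO finA])
  also have "\<dots> = (\<Sum>\<omega>'\<in>A. 1)"
  proof (rule sum.cong)
    fix \<omega>' assume "\<omega>' \<in> A"
    then have o: "\<omega>' \<in> \<Omega>" using AO by auto
    show "(\<Sum>\<omega>\<in>{\<omega>\<in>\<Omega>. \<omega>' \<in> C \<omega>}. 1 / real (card (C \<omega>'))) = 1"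
      unfolding swapset[OF o] using Cpos[OF o] by simp
  qed simp
  finally have eqA: "real (card A) = (\<Sum>\<omega>\<in>\<Omega>. real (card (A \<inter> C \<omega>)) / card (C \<omega>))" by simp
  also have "\<dots> \<le> (\<Sum>\<omega>\<in>\<Omega>. p)"
  proof (rule sum_mono)
    fix \<omega> assume o: "\<omega> \<in> \<Omega>"
    have detC: "D \<omega>' = D \<omega> \<and> B \<omega>' = B \<omega> \<and> c \<omega>' = c \<omega> \<and> P \<omega>' = P \<omega> \<and> Q \<omega>' = Q \<omega>" if "\<omega>' \<in> C \<omega>" for \<omega>'
      using det[of \<omega> \<omega>'] that o unfolding C_def \<Omega>_def by auto
    have "real (card (A \<inter> C \<omega>)) \<le> p * card (C \<omega>)"
    proof (cases "Q \<omega>")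
      case False
      then have "A \<inter> C \<omega> = {}" unfolding A_def using detC by auto
      then show ?thesis using p by simp
    next
      case True
      have eq0: "A \<inter> C \<omega> = {\<omega>'\<in>C \<omega>. P \<omega> (card {e\<in>B \<omega>. \<omega>' e = c \<omega> e})}"
        unfolding A_def using detC True CO[of \<omega>] by auto
      have eq: "A \<inter> C \<omega> = {\<omega>'\<in>{\<omega>' \<in> M \<rightarrow>\<^sub>E (UNIV::bool set). \<forall>e\<in>D \<omega>. \<omega>' e = \<omega> e}. P \<omega> (card {e\<in>B \<omega>. \<omega>' e = c \<omega> e})}"
        using eq0 unfolding C_def \<Omega>_def by simp
      have "real (card (A \<inter> C \<omega>)) \<le> p * card {\<omega>' \<in> M \<rightarrow>\<^sub>E (UNIV::bool set). \<forall>e\<in>D \<omega>. \<omega>' e = \<omega> e}"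
        unfolding eq
        by (rule class_bound[OF fin]) (use DB tail o True in \<open>auto simp: \<Omega>_def\<close>)
      then show ?thesis unfolding C_def \<Omega>_def by simp
    qed
    then show "real (card (A \<inter> C \<omega>)) / card (C \<omega>) \<le> p"
      using Cpos[OF o] by (simp add: divide_le_eq)
  qed
  also have "\<dots> = p * card \<Omega>" by simp
  finally show ?thesis unfolding A_def \<Omega>_def .
qed




definition lend :: "('a \<times> 'a \<Rightarrow> bool) \<Rightarrow> 'a \<times> 'a \<Rightarrow> 'a" where
  "lend \<omega> e = (if \<omega> e then snd e else fst e)"
definition rend :: "('a \<times> 'a \<Rightarrow> bool) \<Rightarrow> 'a \<times> 'a \<Rightarrow> 'a" where
  "rend \<omega> e = (if \<omega> e then fst e else snd e)"

lemma walk_snoc: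
  assumes "xs \<noteq> []"
  shows "walk_in H (xs @ [u]) \<longleftrightarrow> walk_in H xs \<and> H (last xs) u"
proof
  assume w: "walk_in H (xs @ [u])"
  have "H (xs ! i) (xs ! (i + 1))" if "i + 1 < length xs" for i
    using w that unfolding walk_in_def by (auto simp: nth_append dest!: spec[of _ i])
  moreover have "H (last xs) u"
    using w assms unfolding walk_in_def
    by (auto simp: nth_append last_conv_nth dest!: spec[of _ "length xs - 1"])
  ultimately show "walk_in H xs \<and> H (last xs) u" using assms unfolding walk_in_def by auto
next
  assume w: "walk_in H xs \<and> H (last xs) u"
  show "walk_in H (xs @ [u])" unfolding walk_in_def
  proof (intro conjI allI impI)
    fix i assume i: "i + 1 < length (xs @ [u])"
    show "H ((xs @ [u]) ! i) ((xs @ [u]) ! (i + 1))"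
    proof (cases "i + 1 < length xs")
      case True then show ?thesis using w unfolding walk_in_def by (auto simp: nth_append)
    next
      case False
      then have "i = length xs - 1" using i by auto
      then show ?thesis using w assms by (auto simp: nth_append last_conv_nth)
    qed
  qed simp
qed

lemma idx_facts:
  assumes "2 \<le> length xs"
  shows "(xs @ [u]) ! (length xs - 1 - 1) = xs ! (length xs - 2)"
        "(xs @ [u]) ! (length xs - 1) = last xs"
        "(xs @ [u]) ! (length xs - 1 + 1) = u"
proof -
  have a: "length xs - 1 - 1 = length xs - 2" "length xs - 2 < length xs" "length xs - 1 < length xs"
     "length xs - 1 + 1 = length xs" "xs \<noteq> []" using assms by auto
  show "(xs @ [u]) ! (length xs - 1 - 1) = xs ! (length xs - 2)" unfolding a(1) using nth_append_left[OF a(2)] .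
  show "(xs @ [u]) ! (length xs - 1) = last xs" using nth_append_left[OF a(3)] last_conv_nth[OF a(5)] by simp
  show "(xs @ [u]) ! (length xs - 1 + 1) = u" unfolding a(4) by simp
qed

lemma alt_snoc:
  "alternating M (xs @ [u]) \<longleftrightarrow> alternating M xs \<and>
     (2 \<le> length xs \<longrightarrow> inM M (xs ! (length xs - 2)) (last xs) \<noteq> inM M (last xs) u)"
proof
  assume a: "alternating M (xs @ [u])"
  have "inM M (xs ! (i - 1)) (xs ! i) \<noteq> inM M (xs ! i) (xs ! (i + 1))" if "1 \<le> i" "i + 1 < length xs" for i
  proof -
    have "inM M ((xs @ [u]) ! (i - 1)) ((xs @ [u]) ! i) \<noteq> inM M ((xs @ [u]) ! i) ((xs @ [u]) ! (i + 1))"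
      using a that unfolding alternating_def by auto
    moreover have "(xs @ [u]) ! (i - 1) = xs ! (i - 1)" "(xs @ [u]) ! i = xs ! i" "(xs @ [u]) ! (i + 1) = xs ! (i + 1)"
      using that by (auto simp: nth_append)
    ultimately show ?thesis by simp
  qed
  moreover have "inM M (xs ! (length xs - 2)) (last xs) \<noteq> inM M (last xs) u" if "2 \<le> length xs"
  proof -
    have ii: "1 \<le> length xs - 1 \<and> length xs - 1 + 1 < length (xs @ [u])" using that by (simp, linarith)
    have "inM M ((xs @ [u]) ! (length xs - 1 - 1)) ((xs @ [u]) ! (length xs - 1)) \<noteq>
          inM M ((xs @ [u]) ! (length xs - 1)) ((xs @ [u]) ! (length xs - 1 + 1))"
      using a[unfolded alternating_def, rule_format, OF ii] .
    moreover note idx_facts[OF that, of u]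
    ultimately show ?thesis by simp
  qed
  ultimately show "alternating M xs \<and> (2 \<le> length xs \<longrightarrow> inM M (xs ! (length xs - 2)) (last xs) \<noteq> inM M (last xs) u)"
    unfolding alternating_def by auto
next
  assume a: "alternating M xs \<and> (2 \<le> length xs \<longrightarrow> inM M (xs ! (length xs - 2)) (last xs) \<noteq> inM M (last xs) u)"
  show "alternating M (xs @ [u])" unfolding alternating_def
  proof (intro allI impI)
    fix i assume i: "1 \<le> i \<and> i + 1 < length (xs @ [u])"
    show "inM M ((xs @ [u]) ! (i - 1)) ((xs @ [u]) ! i) \<noteq> inM M ((xs @ [u]) ! i) ((xs @ [u]) ! (i + 1))"
    proof (cases "i + 1 < length xs")
      case True
      have "(xs @ [u]) ! (i - 1) = xs ! (i - 1)" "(xs @ [u]) ! i = xs ! i" "(xs @ [u]) ! (i + 1) = xs ! (i + 1)"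
        using True by (auto simp: nth_append)
      then show ?thesis using a i True unfolding alternating_def by auto
    next
      case False
      then have ii: "i = length xs - 1" "2 \<le> length xs" using i by auto
      have "i - 1 = length xs - 1 - 1" "i + 1 = length xs - 1 + 1" using ii by auto
      then show ?thesis using a ii idx_facts[OF ii(2), of u] by simp
    qed
  qed
qed

lemma walk_mono: "(\<And>x y. H x y \<Longrightarrow> H' x y) \<Longrightarrow> walk_in H xs \<Longrightarrow> walk_in H' xs"
  unfolding walk_in_def by auto

locale actx =
  fixes V :: "'a set" and E :: "'a \<Rightarrow> 'a \<Rightarrow> bool" and M :: "('a \<times> 'a) set" and UL UR :: "'a set"
  assumes G: "graph V E" and Mm: "matching E M"
    and part1: "UL \<union> UR = V - covered M" and part2: "UL \<inter> UR = {}"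
begin

lemma finV: "finite V" using G by (simp add: graph_def)
lemma Esym: "E x y \<Longrightarrow> E y x" using G by (simp add: graph_def)
lemma EV: "E x y \<Longrightarrow> x \<in> V \<and> y \<in> V" using G by (simp add: graph_def)
lemma Eirr: "\<not> E x x" using G by (simp add: graph_def)
lemma M_E: "e \<in> M \<Longrightarrow> E (fst e) (snd e)" using Mm unfolding matching_def by auto
lemma M_ne: "e \<in> M \<Longrightarrow> fst e \<noteq> snd e" using M_E Eirr by metis
lemma M_sub: "M \<subseteq> V \<times> V"
proof
  fix e assume e: "e \<in> M"
  have "fst e \<in> V \<and> snd e \<in> V" using EV[OF M_E[OF e]] .
  then show "e \<in> V \<times> V" by (simp add: mem_Times_iff)
qed
lemma finM: "finite M" using M_sub finV finite_subset by blast
lemma M_uniq: "e \<in> M \<Longrightarrow> e' \<in> M \<Longrightarrow> x = fst e \<or> x = snd e \<Longrightarrow> x = fst e' \<or> x = snd e' \<Longrightarrow> e = e'"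
  using Mm unfolding matching_def by blast
lemma lend_fs: "lend \<omega> e = fst e \<or> lend \<omega> e = snd e" by (simp add: lend_def)
lemma rend_fs: "rend \<omega> e = fst e \<or> rend \<omega> e = snd e" by (simp add: rend_def)
lemma lr_cases: "(lend \<omega> e = fst e \<and> rend \<omega> e = snd e) \<or> (lend \<omega> e = snd e \<and> rend \<omega> e = fst e)"
  by (simp add: lend_def rend_def)
lemma lr_ne: assumes "e \<in> M" shows "lend \<omega> e \<noteq> rend \<omega> e"
  using M_ne[OF assms] by (simp add: lend_def rend_def)
lemma lend_inj: "inj_on (lend \<omega>) M"
proof (rule inj_onI)
  fix e e' assume "e \<in> M" "e' \<in> M" "lend \<omega> e = lend \<omega> e'"
  then show "e = e'" using M_uniq[of e e' "lend \<omega> e"] lend_fs[of \<omega> e] lend_fs[of \<omega> e'] by auto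
qed
lemma rend_inj: "inj_on (rend \<omega>) M"
proof (rule inj_onI)
  fix e e' assume "e \<in> M" "e' \<in> M" "rend \<omega> e = rend \<omega> e'"
  then show "e = e'" using M_uniq[of e e' "rend \<omega> e"] rend_fs[of \<omega> e] rend_fs[of \<omega> e'] by auto
qed
lemma lend_rend_ne: "e \<in> M \<Longrightarrow> e' \<in> M \<Longrightarrow> lend \<omega> e \<noteq> rend \<omega> e'"
proof
  assume a: "e \<in> M" "e' \<in> M" "lend \<omega> e = rend \<omega> e'"
  then have "e = e'" using M_uniq[of e e' "lend \<omega> e"] lend_fs[of \<omega> e] rend_fs[of \<omega> e'] by auto
  then show False using a lr_ne[of e \<omega>] by simp
qed
lemma covered_iff: "x \<in> covered M \<longleftrightarrow> (\<exists>e\<in>M. x = fst e \<or> x = snd e)"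
  unfolding covered_def image_def by blast
lemma UL_cov: "x \<in> UL \<Longrightarrow> x \<notin> covered M" using part1 by blast
lemma UR_cov: "x \<in> UR \<Longrightarrow> x \<notin> covered M" using part1 by blast
lemma UL_V: "UL \<subseteq> V" using part1 by blast
lemma UR_V: "UR \<subseteq> V" using part1 by blast
lemma finUL: "finite UL" using UL_V finV finite_subset by blast
lemma lend_cov: "e \<in> M \<Longrightarrow> lend \<omega> e \<in> covered M" using lend_fs[of \<omega> e] covered_iff by blast
lemma rend_cov: "e \<in> M \<Longrightarrow> rend \<omega> e \<in> covered M" using rend_fs[of \<omega> e] covered_iff by blast
lemma M_fsV: "e \<in> M \<Longrightarrow> fst e \<in> V \<and> snd e \<in> V" using M_E EV by blast
lemma lend_V: "e \<in> M \<Longrightarrow> lend \<omega> e \<in> V" using M_fsV lend_fs[of \<omega> e] by metis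
lemma rend_V: "e \<in> M \<Longrightarrow> rend \<omega> e \<in> V" using M_fsV rend_fs[of \<omega> e] by metis
lemma LM: "L_M UL M \<omega> = UL \<union> lend \<omega> ` M"
proof
  show "L_M UL M \<omega> \<subseteq> UL \<union> lend \<omega> ` M"
  proof
    fix x assume "x \<in> L_M UL M \<omega>"
    then consider "x \<in> UL" | v where "(x, v) \<in> M" "\<not> \<omega> (x, v)" | u where "(u, x) \<in> M" "\<omega> (u, x)"
      unfolding L_M_def by blast
    then show "x \<in> UL \<union> lend \<omega> ` M"
    proof cases
      case 1 then show ?thesis by simp
    next
      case (2 v) then have "x = lend \<omega> (x, v)" by (simp add: lend_def)
      then show ?thesis using 2 by blast
    next
      case (3 u) then have "x = lend \<omega> (u, x)" by (simp add: lend_def)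
      then show ?thesis using 3 by blast
    qed
  qed
  show "UL \<union> lend \<omega> ` M \<subseteq> L_M UL M \<omega>"
  proof
    fix x assume "x \<in> UL \<union> lend \<omega> ` M"
    then consider "x \<in> UL" | a b where "(a, b) \<in> M" "x = lend \<omega> (a, b)" by auto
    then show "x \<in> L_M UL M \<omega>"
    proof cases
      case 1 then show ?thesis unfolding L_M_def by simp
    next
      case (2 a b) then show ?thesis unfolding L_M_def lend_def by (cases "\<omega> (a, b)") auto
    qed
  qed
qed
lemma RM: "R_M UR M \<omega> = UR \<union> rend \<omega> ` M"
proof
  show "R_M UR M \<omega> \<subseteq> UR \<union> rend \<omega> ` M"
  proof
    fix x assume "x \<in> R_M UR M \<omega>"
    then consider "x \<in> UR" | u where "(u, x) \<in> M" "\<not> \<omega> (u, x)" | v where "(x, v) \<in> M" "\<omega> (x, v)"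
      unfolding R_M_def by blast
    then show "x \<in> UR \<union> rend \<omega> ` M"
    proof cases
      case 1 then show ?thesis by simp
    next
      case (2 v) then have "x = rend \<omega> (v, x)" by (simp add: rend_def)
      then show ?thesis using 2 by blast
    next
      case (3 u) then have "x = rend \<omega> (x, u)" by (simp add: rend_def)
      then show ?thesis using 3 by blast
    qed
  qed
  show "UR \<union> rend \<omega> ` M \<subseteq> R_M UR M \<omega>"
  proof
    fix x assume "x \<in> UR \<union> rend \<omega> ` M"
    then consider "x \<in> UR" | a b where "(a, b) \<in> M" "x = rend \<omega> (a, b)" by auto
    then show "x \<in> R_M UR M \<omega>"
    proof cases
      case 1 then show ?thesis unfolding R_M_def by simp
    next
      case (2 a b) then show ?thesis unfolding R_M_def rend_def by (cases "\<omega> (a, b)") auto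
    qed
  qed
qed
lemma LR_disj: "x \<in> L_M UL M \<omega> \<Longrightarrow> x \<in> R_M UR M \<omega> \<Longrightarrow> False"
proof -
  assume a: "x \<in> L_M UL M \<omega>" "x \<in> R_M UR M \<omega>"
  show False
  proof (cases "x \<in> covered M")
    case True
    then have "x \<notin> UL" "x \<notin> UR" using UL_cov UR_cov by auto
    then obtain e e' where "e \<in> M" "e' \<in> M" "x = lend \<omega> e" "x = rend \<omega> e'" using a unfolding LM RM by auto
    then show False using lend_rend_ne by metis
  next
    case False
    then have "x \<notin> lend \<omega> ` M" "x \<notin> rend \<omega> ` M" using lend_cov rend_cov by auto
    then have "x \<in> UL" "x \<in> UR" using a unfolding LM RM by auto
    then show False using part2 by auto
  qed
qed
lemma inM_M: "inM M x y \<Longrightarrow> \<exists>e\<in>M. (x = fst e \<and> y = snd e) \<or> (x = snd e \<and> y = fst e)"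
  unfolding inM_def by force
lemma inM_lr: "e \<in> M \<Longrightarrow> inM M (rend \<omega> e) (lend \<omega> e)"
  unfolding inM_def lend_def rend_def by auto
lemma E_lr: "e \<in> M \<Longrightarrow> E (rend \<omega> e) (lend \<omega> e)"
  using M_E Esym by (auto simp: lend_def rend_def)

primrec Sq :: "('a \<times> 'a \<Rightarrow> bool) \<Rightarrow> nat \<Rightarrow> 'a set" where
  "Sq \<omega> 0 = UL"
| "Sq \<omega> (Suc i) = Sq \<omega> i \<union> lend \<omega> ` {e\<in>M. rend \<omega> e \<in> nbhd E (Sq \<omega> i)}"

primrec Dq :: "('a \<times> 'a \<Rightarrow> bool) \<Rightarrow> nat \<Rightarrow> ('a \<times> 'a) set" where
  "Dq \<omega> 0 = {}"
| "Dq \<omega> (Suc i) = Dq \<omega> i \<union> {e\<in>M. fst e \<in> nbhd E (Sq \<omega> i) \<or> snd e \<in> nbhd E (Sq \<omega> i)}"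

lemma Sq_mono: "i \<le> j \<Longrightarrow> Sq \<omega> i \<subseteq> Sq \<omega> j"
  by (induction j) (auto simp: le_Suc_eq)
lemma Dq_mono: "i \<le> j \<Longrightarrow> Dq \<omega> i \<subseteq> Dq \<omega> j"
  by (induction j) (auto simp: le_Suc_eq)
lemma UL_Sq: "UL \<subseteq> Sq \<omega> i" using Sq_mono[of 0 i] by simp
lemma Sq_L: "Sq \<omega> i \<subseteq> UL \<union> lend \<omega> ` M" by (induction i) auto
lemma Sq_V: "Sq \<omega> i \<subseteq> V" using Sq_L[of \<omega> i] UL_V lend_V by blast
lemma finSq: "finite (Sq \<omega> i)" using Sq_V finV finite_subset by blast
lemma Dq_M: "Dq \<omega> i \<subseteq> M" by (induction i) auto
lemma finDq: "finite (Dq \<omega> i)" using Dq_M finM finite_subset by blast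
lemma nbhd_V: "nbhd E S \<subseteq> V" unfolding nbhd_def using EV by blast

lemma lend_in_D: "e \<in> M \<Longrightarrow> lend \<omega> e \<in> Sq \<omega> i \<Longrightarrow> e \<in> Dq \<omega> i"
proof (induction i)
  case 0 then show ?case using UL_cov[of "lend \<omega> e"] lend_cov[of e \<omega>] by simp
next
  case (Suc i)
  show ?case
  proof (cases "lend \<omega> e \<in> Sq \<omega> i")
    case True then show ?thesis using Suc by auto
  next
    case False
    then obtain e' where e': "e' \<in> M" "rend \<omega> e' \<in> nbhd E (Sq \<omega> i)" "lend \<omega> e = lend \<omega> e'"
      using Suc by auto
    then have "e = e'" using lend_inj Suc.prems(1) by (metis inj_onD)
    then show ?thesis using e' lr_cases[of \<omega> e'] by auto
  qed
qed

definition pathprop :: "('a \<times> 'a \<Rightarrow> bool) \<Rightarrow> nat \<Rightarrow> 'a \<Rightarrow> 'a list \<Rightarrow> bool" where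
  "pathprop \<omega> i v xs \<longleftrightarrow> path_in (E_M E UL UR M \<omega>) xs \<and> alternating M xs \<and> hd xs \<in> UL \<and> last xs = v
     \<and> walk_length xs \<le> 2 * i \<and> set xs \<subseteq> Sq \<omega> i \<union> rend \<omega> ` {e\<in>M. lend \<omega> e \<in> Sq \<omega> i}
     \<and> (2 \<le> length xs \<longrightarrow> inM M (xs ! (length xs - 2)) (last xs))"

lemma paths: "v \<in> Sq \<omega> i \<Longrightarrow> \<exists>xs. pathprop \<omega> i v xs"
proof (induction i arbitrary: v)
  case 0
  then have "pathprop \<omega> 0 v [v]" unfolding pathprop_def path_in_def walk_in_def alternating_def walk_length_def
    by auto
  then show ?case by blast
next
  case (Suc i)
  have monoset: "Sq \<omega> i \<union> rend \<omega> ` {e\<in>M. lend \<omega> e \<in> Sq \<omega> i} \<subseteq> Sq \<omega> (Suc i) \<union> rend \<omega> ` {e\<in>M. lend \<omega> e \<in> Sq \<omega> (Suc i)}"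
    by auto
  show ?case
  proof (cases "v \<in> Sq \<omega> i")
    case True
    then obtain xs where "pathprop \<omega> i v xs" using Suc.IH by blast
    then have "pathprop \<omega> (Suc i) v xs" unfolding pathprop_def using monoset by auto
    then show ?thesis by blast
  next
    case False
    then obtain e where e: "e \<in> M" "rend \<omega> e \<in> nbhd E (Sq \<omega> i)" "v = lend \<omega> e" using Suc.prems by auto
    let ?r = "rend \<omega> e"
    obtain w where w: "w \<in> Sq \<omega> i" "E ?r w" using e(2) unfolding nbhd_def by auto
    obtain xs where xs: "pathprop \<omega> i w xs" using Suc.IH w(1) by blast
    have ne: "xs \<noteq> []" using xs unfolding pathprop_def path_in_def walk_in_def by auto
    have wL: "w \<in> L_M UL M \<omega>" using w(1) Sq_L LM by auto
    have rR: "?r \<in> R_M UR M \<omega>" using e(1) RM by auto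
    have vL: "v \<in> L_M UL M \<omega>" using e LM by auto
    have H1: "E_M E UL UR M \<omega> w ?r" unfolding E_M_def using wL rR Esym w(2) by auto
    have H2: "E_M E UL UR M \<omega> ?r v" unfolding E_M_def using vL rR E_lr e by auto
    have setxs: "set xs \<subseteq> Sq \<omega> i \<union> rend \<omega> ` {e\<in>M. lend \<omega> e \<in> Sq \<omega> i}" using xs unfolding pathprop_def by auto
    have rnot: "?r \<notin> set xs"
    proof
      assume "?r \<in> set xs"
      then have "?r \<in> Sq \<omega> i \<or> ?r \<in> rend \<omega> ` {e\<in>M. lend \<omega> e \<in> Sq \<omega> i}" using setxs by auto
      then show False
      proof
        assume "?r \<in> Sq \<omega> i" then have "?r \<in> L_M UL M \<omega>" using Sq_L LM by auto
        then show False using rR LR_disj by blast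
      next
        assume "?r \<in> rend \<omega> ` {e\<in>M. lend \<omega> e \<in> Sq \<omega> i}"
        then obtain e' where "e' \<in> M" "lend \<omega> e' \<in> Sq \<omega> i" "?r = rend \<omega> e'" by auto
        then have "e' = e" using rend_inj e(1) by (metis inj_onD)
        then show False using False e \<open>lend \<omega> e' \<in> Sq \<omega> i\<close> by simp
      qed
    qed
    have vnot: "v \<notin> set xs"
    proof
      assume "v \<in> set xs"
      then have "v \<in> Sq \<omega> i \<or> v \<in> rend \<omega> ` {e\<in>M. lend \<omega> e \<in> Sq \<omega> i}" using setxs by auto
      then show False
      proof
        assume "v \<in> Sq \<omega> i" then show False using False by simp
      next
        assume "v \<in> rend \<omega> ` {e\<in>M. lend \<omega> e \<in> Sq \<omega> i}"
        then obtain e' where "e' \<in> M" "v = rend \<omega> e'" by auto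
        then show False using lend_rend_ne[OF e(1), of e' \<omega>] e(3) by simp
      qed
    qed
    have rv: "?r \<noteq> v" using lr_ne[OF e(1), of \<omega>] e(3) by auto
    have lastw: "last xs = w" using xs unfolding pathprop_def by auto
    have notin: "\<not> inM M w ?r"
    proof
      assume "inM M w ?r"
      then obtain e' where e': "e' \<in> M" "(w = fst e' \<and> ?r = snd e') \<or> (w = snd e' \<and> ?r = fst e')" using inM_M by blast
      then have "e' = e" using M_uniq e(1) lr_cases[of \<omega> e] by metis
      then have "w = lend \<omega> e" using e' lr_cases[of \<omega> e] lr_ne[OF e(1)] by metis
      then show False using w(1) False e(3) by simp
    qed
    have inlr: "inM M ?r v" using inM_lr e by simp
    define ys where "ys = xs @ [?r, v]"
    have ys1: "ys = (xs @ [?r]) @ [v]" unfolding ys_def by simp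
    have w1: "walk_in (E_M E UL UR M \<omega>) (xs @ [?r])"
      using walk_snoc[OF ne] xs H1 lastw unfolding pathprop_def path_in_def by auto
    have w2: "walk_in (E_M E UL UR M \<omega>) ys"
      unfolding ys1 using walk_snoc[of "xs @ [?r]"] w1 H2 by simp
    have a1: "alternating M (xs @ [?r])"
      using alt_snoc[of M xs ?r] xs notin lastw unfolding pathprop_def by auto
    have a2: "alternating M ys"
      unfolding ys1 using alt_snoc[of M "xs @ [?r]" v] a1 inlr notin ne lastw
      by (auto simp: nth_append last_conv_nth)
    have dist: "distinct ys" unfolding ys_def using xs rnot vnot rv unfolding pathprop_def path_in_def by auto
    have "pathprop \<omega> (Suc i) v ys"
      unfolding pathprop_def path_in_def
    proof (intro conjI)
      show "walk_in (E_M E UL UR M \<omega>) ys" by (rule w2)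
      show "distinct ys" by (rule dist)
      show "alternating M ys" by (rule a2)
      show "hd ys \<in> UL" using xs ne unfolding ys_def pathprop_def by auto
      show "last ys = v" unfolding ys_def by simp
      show "walk_length ys \<le> 2 * Suc i" using xs unfolding ys_def pathprop_def walk_length_def by auto
      show "set ys \<subseteq> Sq \<omega> (Suc i) \<union> rend \<omega> ` {e \<in> M. lend \<omega> e \<in> Sq \<omega> (Suc i)}"
        using setxs monoset e Suc.prems unfolding ys_def by auto
      show "2 \<le> length ys \<longrightarrow> inM M (ys ! (length ys - 2)) (last ys)"
        using inlr unfolding ys_def by (auto simp: nth_append)
    qed
    then show ?thesis by blast
  qed
qed

end



context actx begin

abbreviation Nq where "Nq \<omega> i \<equiv> nbhd E (Sq \<omega> i)"
definition "Fq \<omega> i = {e\<in>M. (fst e \<in> Nq \<omega> i \<or> snd e \<in> Nq \<omega> i) \<and> e \<notin> Dq \<omega> i}"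
definition "Aq \<omega> i = {e\<in>Fq \<omega> i. fst e \<in> Nq \<omega> i \<and> snd e \<in> Nq \<omega> i}"
definition "Bq \<omega> i = {e\<in>Fq \<omega> i. \<not> (fst e \<in> Nq \<omega> i \<and> snd e \<in> Nq \<omega> i)}"
definition "cq \<omega> i = (\<lambda>e. fst e \<in> Nq \<omega> i)"
definition "Bg \<omega> i = {e\<in>Bq \<omega> i. \<omega> e = cq \<omega> i e}"
definition "Xq \<omega> i = card (Bg \<omega> i)"
definition "Failq \<omega> i = {e\<in>Dq \<omega> i. lend \<omega> e \<notin> Sq \<omega> i}"
definition "Gq \<omega> i = {e\<in>Failq \<omega> i. rend \<omega> e \<in> Nq \<omega> i}"
definition "hq \<omega> i = 2 * card (Gq \<omega> i) + 2 * card (Aq \<omega> i)"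
definition "bq \<omega> i = card (Bq \<omega> i)"

lemma Fq_M: "Fq \<omega> i \<subseteq> M" unfolding Fq_def by auto
lemma Aq_F: "Aq \<omega> i \<subseteq> Fq \<omega> i" unfolding Aq_def by auto
lemma Bq_F: "Bq \<omega> i \<subseteq> Fq \<omega> i" unfolding Bq_def by auto
lemma Bg_B: "Bg \<omega> i \<subseteq> Bq \<omega> i" unfolding Bg_def by auto
lemma Fail_D: "Failq \<omega> i \<subseteq> Dq \<omega> i" unfolding Failq_def by auto
lemma Gq_Fail: "Gq \<omega> i \<subseteq> Failq \<omega> i" unfolding Gq_def by auto
lemma finF: "finite (Fq \<omega> i)" using Fq_M finM finite_subset by blast
lemma finA: "finite (Aq \<omega> i)" using Aq_F finF finite_subset by blast
lemma finB: "finite (Bq \<omega> i)" using Bq_F finF finite_subset by blast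
lemma finBg: "finite (Bg \<omega> i)" using Bg_B finB finite_subset by blast
lemma finFail: "finite (Failq \<omega> i)" using Fail_D finDq finite_subset by blast
lemma finG: "finite (Gq \<omega> i)" using Gq_Fail finFail finite_subset by blast
lemma F_notD: "e \<in> Fq \<omega> i \<Longrightarrow> e \<notin> Dq \<omega> i" unfolding Fq_def by auto
lemma Bq_D: "Bq \<omega> i \<subseteq> M - Dq \<omega> i" using Bq_F Fq_M F_notD by blast

lemma Aq_rend: "e \<in> Aq \<omega> i \<Longrightarrow> rend \<omega> e \<in> Nq \<omega> i"
  unfolding Aq_def using rend_fs[of \<omega> e] by auto
lemma Bg_rend: "e \<in> Bg \<omega> i \<Longrightarrow> rend \<omega> e \<in> Nq \<omega> i"
  unfolding Bg_def Bq_def Fq_def cq_def rend_def by (cases "\<omega> e") auto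
lemma fresh_notS: "e \<in> M \<Longrightarrow> e \<notin> Dq \<omega> i \<Longrightarrow> lend \<omega> e \<notin> Sq \<omega> i"
  using lend_in_D by blast
lemma rend_N_Suc: "e \<in> M \<Longrightarrow> rend \<omega> e \<in> Nq \<omega> i \<Longrightarrow> lend \<omega> e \<in> Sq \<omega> (Suc i)"
  by auto

lemma step2: "card (Sq \<omega> i) + card (Aq \<omega> i) + Xq \<omega> i + card (Gq \<omega> i) \<le> card (Sq \<omega> (Suc i))"
proof -
  define Z where "Z = Aq \<omega> i \<union> Bg \<omega> i \<union> Gq \<omega> i"
  have ZM: "Z \<subseteq> M" unfolding Z_def using Aq_F[of \<omega> i] Fq_M[of \<omega> i] Bg_B[of \<omega> i] Bq_F[of \<omega> i] Gq_Fail[of \<omega> i] Fail_D[of \<omega> i] Dq_M[of \<omega> i] by blast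
  have finZ: "finite Z" using ZM finM finite_subset by blast
  have d1: "Aq \<omega> i \<inter> Bg \<omega> i = {}" unfolding Aq_def Bg_def Bq_def by auto
  have d2: "(Aq \<omega> i \<union> Bg \<omega> i) \<inter> Gq \<omega> i = {}"
    using Aq_F[of \<omega> i] Bg_B[of \<omega> i] Bq_F[of \<omega> i] Gq_Fail[of \<omega> i] Fail_D[of \<omega> i] F_notD[of _ \<omega> i] by blast
  have cZ: "card Z = card (Aq \<omega> i) + Xq \<omega> i + card (Gq \<omega> i)"
    unfolding Z_def Xq_def using d1 d2 finA finBg finG
    by (simp add: card_Un_disjoint)
  have ci: "card (lend \<omega> ` Z) = card Z" using card_image[OF inj_on_subset[OF lend_inj ZM]] .
  have sub: "lend \<omega> ` Z \<subseteq> Sq \<omega> (Suc i)"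
  proof
    fix x assume "x \<in> lend \<omega> ` Z"
    then obtain e where e: "e \<in> Z" "x = lend \<omega> e" by auto
    have "rend \<omega> e \<in> Nq \<omega> i" using e(1) Aq_rend Bg_rend unfolding Z_def Gq_def by blast
    then show "x \<in> Sq \<omega> (Suc i)" using e ZM rend_N_Suc by blast
  qed
  have disj: "lend \<omega> ` Z \<inter> Sq \<omega> i = {}"
  proof -
    have "lend \<omega> e \<notin> Sq \<omega> i" if eZ: "e \<in> Z" for e
    proof -
      consider "e \<in> Aq \<omega> i \<union> Bg \<omega> i" | "e \<in> Gq \<omega> i" using eZ unfolding Z_def by blast
      then show ?thesis
      proof cases
        case 1 then have "e \<in> Fq \<omega> i" using Aq_F Bg_B Bq_F by blast
        then show ?thesis using fresh_notS F_notD Fq_M by blast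
      next
        case 2 then show ?thesis unfolding Gq_def Failq_def by auto
      qed
    qed
    then show ?thesis by blast
  qed
  have "card (Sq \<omega> i \<union> lend \<omega> ` Z) = card (Sq \<omega> i) + card (lend \<omega> ` Z)"
    using disj finSq finZ by (simp add: card_Un_disjoint inf_commute)
  moreover have "card (Sq \<omega> i \<union> lend \<omega> ` Z) \<le> card (Sq \<omega> (Suc i))"
    using sub Sq_mono[of i "Suc i" \<omega>] by (intro card_mono[OF finSq]) auto
  ultimately show ?thesis using cZ ci by simp
qed

lemma step3: "card (Failq \<omega> (Suc i)) + card (Gq \<omega> i) + Xq \<omega> i \<le> card (Failq \<omega> i) + bq \<omega> i"
proof -
  have sub: "Failq \<omega> (Suc i) \<subseteq> (Failq \<omega> i - Gq \<omega> i) \<union> (Bq \<omega> i - Bg \<omega> i)"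
  proof
    fix e assume e: "e \<in> Failq \<omega> (Suc i)"
    then have eD: "e \<in> Dq \<omega> (Suc i)" and nl: "lend \<omega> e \<notin> Sq \<omega> (Suc i)" unfolding Failq_def by auto
    have eM: "e \<in> M" using eD Dq_M by blast
    have nl0: "lend \<omega> e \<notin> Sq \<omega> i" using nl by auto
    have nr: "rend \<omega> e \<notin> Nq \<omega> i" using nl eM rend_N_Suc by blast
    show "e \<in> (Failq \<omega> i - Gq \<omega> i) \<union> (Bq \<omega> i - Bg \<omega> i)"
    proof (cases "e \<in> Dq \<omega> i")
      case True
      then show ?thesis using nl0 nr unfolding Failq_def Gq_def by auto
    next
      case False
      then have eF: "e \<in> Fq \<omega> i" using eD eM unfolding Fq_def by auto
      have "e \<notin> Aq \<omega> i" using nr Aq_rend by blast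
      moreover have "e \<notin> Bg \<omega> i" using nr Bg_rend by blast
      ultimately show ?thesis using eF unfolding Aq_def Bq_def by auto
    qed
  qed
  have "card (Failq \<omega> (Suc i)) \<le> card ((Failq \<omega> i - Gq \<omega> i) \<union> (Bq \<omega> i - Bg \<omega> i))"
    using sub finFail finB by (intro card_mono) auto
  also have "\<dots> \<le> card (Failq \<omega> i - Gq \<omega> i) + card (Bq \<omega> i - Bg \<omega> i)" by (rule card_Un_le)
  also have "card (Failq \<omega> i - Gq \<omega> i) = card (Failq \<omega> i) - card (Gq \<omega> i)"
    using Gq_Fail finG by (simp add: card_Diff_subset)
  also have "card (Bq \<omega> i - Bg \<omega> i) = card (Bq \<omega> i) - card (Bg \<omega> i)"
    using Bg_B finBg by (simp add: card_Diff_subset)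
  finally have "card (Failq \<omega> (Suc i)) \<le> card (Failq \<omega> i) - card (Gq \<omega> i) + (card (Bq \<omega> i) - card (Bg \<omega> i))" .
  moreover have "card (Gq \<omega> i) \<le> card (Failq \<omega> i)" using Gq_Fail finFail by (rule card_mono[rotated])
  moreover have "card (Bg \<omega> i) \<le> card (Bq \<omega> i)" using Bg_B finB by (rule card_mono[rotated])
  ultimately show ?thesis unfolding Xq_def bq_def by linarith
qed

lemma step1:
  assumes cov: "Nq \<omega> i \<subseteq> covered M"
  shows "card (Nq \<omega> i) \<le> 2 * card (Aq \<omega> i) + bq \<omega> i + (card (Sq \<omega> i) - card UL) + card (Failq \<omega> i) + card (Gq \<omega> i)"
proof -
  let ?N = "Nq \<omega> i"
  define nend where "nend e = (if fst e \<in> ?N then fst e else snd e)" for e :: "'a \<times> 'a"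
  define W where "W = {e\<in>M. lend \<omega> e \<in> Sq \<omega> i - UL}"
  have sub: "?N \<subseteq> fst ` Aq \<omega> i \<union> snd ` Aq \<omega> i \<union> nend ` Bq \<omega> i \<union> rend \<omega> ` W \<union> lend \<omega> ` Failq \<omega> i \<union> rend \<omega> ` Gq \<omega> i"
  proof
    fix u assume uN: "u \<in> ?N"
    then have "u \<in> covered M" using cov by blast
    then obtain e where eM: "e \<in> M" and ue: "u = fst e \<or> u = snd e" using covered_iff by blast
    have uS: "u \<notin> Sq \<omega> i" using uN unfolding nbhd_def by auto
    show "u \<in> fst ` Aq \<omega> i \<union> snd ` Aq \<omega> i \<union> nend ` Bq \<omega> i \<union> rend \<omega> ` W \<union> lend \<omega> ` Failq \<omega> i \<union> rend \<omega> ` Gq \<omega> i"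
    proof (cases "e \<in> Dq \<omega> i")
      case False
      then have eF: "e \<in> Fq \<omega> i" using eM ue uN unfolding Fq_def by auto
      show ?thesis
      proof (cases "e \<in> Aq \<omega> i")
        case True then show ?thesis using ue by blast
      next
        case False
        then have eB: "e \<in> Bq \<omega> i" using eF unfolding Aq_def Bq_def by auto
        then have "nend e = u" using ue uN unfolding Bq_def nend_def by auto
        then show ?thesis using eB by blast
      qed
    next
      case True
      show ?thesis
      proof (cases "lend \<omega> e \<in> Sq \<omega> i")
        case True
        then have "u \<noteq> lend \<omega> e" using uS by auto
        then have "u = rend \<omega> e" using ue lr_cases[of \<omega> e] by auto
        moreover have "e \<in> W" unfolding W_def using True eM UL_cov lend_cov by blast
        ultimately show ?thesis by blast
      next
        case False
        then have eF: "e \<in> Failq \<omega> i" using \<open>e \<in> Dq \<omega> i\<close> unfolding Failq_def by auto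
        consider "u = lend \<omega> e" | "u = rend \<omega> e" using ue lr_cases[of \<omega> e] by auto
        then show ?thesis
        proof cases
          case 1 then show ?thesis using eF by blast
        next
          case 2 then have "e \<in> Gq \<omega> i" using eF uN unfolding Gq_def by auto
          then show ?thesis using 2 by blast
        qed
      qed
    qed
  qed
  have cW: "card W \<le> card (Sq \<omega> i) - card UL"
  proof -
    have "card W = card (lend \<omega> ` W)"
      using card_image[OF inj_on_subset[OF lend_inj]] unfolding W_def by (metis (no_types, lifting) mem_Collect_eq subsetI)
    also have "\<dots> \<le> card (Sq \<omega> i - UL)" using finSq unfolding W_def by (intro card_mono) auto
    also have "\<dots> = card (Sq \<omega> i) - card UL" using UL_Sq finUL by (simp add: card_Diff_subset)
    finally show ?thesis .
  qed
  have "card ?N \<le> card (fst ` Aq \<omega> i \<union> snd ` Aq \<omega> i \<union> nend ` Bq \<omega> i \<union> rend \<omega> ` W \<union> lend \<omega> ` Failq \<omega> i \<union> rend \<omega> ` Gq \<omega> i)"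
    using sub finA finB finFail finG finM unfolding W_def by (intro card_mono) auto
  also have "\<dots> \<le> card (fst ` Aq \<omega> i) + card (snd ` Aq \<omega> i) + card (nend ` Bq \<omega> i) + card (rend \<omega> ` W) + card (lend \<omega> ` Failq \<omega> i) + card (rend \<omega> ` Gq \<omega> i)"
    by (intro order.trans[OF card_Un_le] add_mono order.refl)+
  also have "\<dots> \<le> card (Aq \<omega> i) + card (Aq \<omega> i) + card (Bq \<omega> i) + card W + card (Failq \<omega> i) + card (Gq \<omega> i)"
    by (intro add_mono card_image_le finA finB finFail finG) (use finM in \<open>auto simp: W_def\<close>)
  finally show ?thesis using cW unfolding bq_def by linarith
qed

end



lemma pow52: "1 \<le> i \<Longrightarrow> real i + 1 < (5/2::real) ^ i"
proof (induction i)
  case 0 then show ?case by simp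
next
  case (Suc i)
  show ?case
  proof (cases "i = 0")
    case True then show ?thesis by simp
  next
    case False
    then have "real i + 1 < (5/2) ^ i" using Suc by simp
    then have "(5/2) * (real i + 1) < (5/2) * (5/2::real) ^ i" by simp
    then show ?thesis by simp
  qed
qed

definition mstep :: "nat \<Rightarrow> nat" where "mstep i = (if i = 0 then 10 else 6 * (i + 2))"

context actx begin

lemma N_cov:
  assumes noK: "\<not> (\<exists>xs. augmenting_path E M xs \<and> hd xs \<in> UL \<and> last xs \<in> UR \<and> walk_length xs \<le> K)"
  and iK: "2 * i + 1 \<le> K"
  shows "Nq \<omega> i \<subseteq> covered M"
proof
  fix u assume uN: "u \<in> Nq \<omega> i"
  show "u \<in> covered M"
  proof (rule ccontr)
    assume nc: "u \<notin> covered M"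
    have uV: "u \<in> V" using uN nbhd_V by blast
    have uS: "u \<notin> Sq \<omega> i" using uN unfolding nbhd_def by auto
    obtain w where w: "w \<in> Sq \<omega> i" "E u w" using uN unfolding nbhd_def by auto
    have uUR: "u \<in> UR" using uV nc uS UL_Sq[of \<omega> i] part1 by blast
    obtain xs where xs: "pathprop \<omega> i w xs" using paths w(1) by blast
    have ne: "xs \<noteq> []" using xs unfolding pathprop_def path_in_def walk_in_def by auto
    have lastw: "last xs = w" using xs unfolding pathprop_def by auto
    define ys where "ys = xs @ [u]"
    have wE: "walk_in E xs" using xs walk_mono[of "E_M E UL UR M \<omega>" E xs] unfolding pathprop_def path_in_def E_M_def by blast
    have wys: "walk_in E ys" unfolding ys_def using walk_snoc[OF ne] wE lastw w(2) Esym by auto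
    have unot: "u \<notin> set xs"
    proof
      assume "u \<in> set xs"
      then have "u \<in> Sq \<omega> i \<or> u \<in> rend \<omega> ` {e\<in>M. lend \<omega> e \<in> Sq \<omega> i}" using xs unfolding pathprop_def by auto
      then show False using uS nc rend_cov by blast
    qed
    have dys: "distinct ys" unfolding ys_def using xs unot unfolding pathprop_def path_in_def by auto
    have ninM: "\<not> inM M w u"
    proof
      assume "inM M w u"
      then obtain e where "e \<in> M" "(w = fst e \<and> u = snd e) \<or> (w = snd e \<and> u = fst e)" using inM_M by blast
      then show False using nc covered_iff by blast
    qed
    have ays: "alternating M ys" unfolding ys_def
      using alt_snoc[of M xs u] xs ninM lastw unfolding pathprop_def by auto
    have hd: "hd ys \<in> UL" unfolding ys_def using xs ne unfolding pathprop_def by auto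
    have "walk_length ys \<le> K" using xs iK unfolding ys_def pathprop_def walk_length_def by auto
    moreover have "augmenting_path E M ys" unfolding augmenting_path_def path_in_def
      using wys dys ays hd UL_cov nc unfolding ys_def by auto
    ultimately show False using noK hd uUR unfolding ys_def by auto
  qed
qed

lemma inv:
  assumes noK: "\<not> (\<exists>xs. augmenting_path E M xs \<and> hd xs \<in> UL \<and> last xs \<in> UR \<and> walk_length xs \<le> K)"
  and tK: "2 * t + 1 \<le> K"
  and expand: "\<forall>S. S \<subseteq> V \<and> real (card S) \<le> \<beta> \<longrightarrow> real (card (nbhd E S)) \<ge> \<alpha> * real (card S)"
  and al: "\<alpha> \<ge> 4"
  shows "i \<le> t \<Longrightarrow> (\<forall>j<i. real (card (Sq \<omega> j)) \<le> \<beta> \<and> bq \<omega> j \<le> 4 * Xq \<omega> j + hq \<omega> j) \<Longrightarrow>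
     real (card (Failq \<omega> i)) \<le> 3 * real (card (Sq \<omega> i)) \<and> (\<alpha>/4) ^ i * real (card UL) \<le> real (card (Sq \<omega> i))"
proof (induction i)
  case 0
  have "Failq \<omega> 0 = {}" unfolding Failq_def by simp
  then show ?case by simp
next
  case (Suc i)
  have IH: "real (card (Failq \<omega> i)) \<le> 3 * real (card (Sq \<omega> i)) \<and> (\<alpha>/4) ^ i * real (card UL) \<le> real (card (Sq \<omega> i))"
    using Suc by auto
  have hi: "real (card (Sq \<omega> i)) \<le> \<beta>" "bq \<omega> i \<le> 4 * Xq \<omega> i + hq \<omega> i" using Suc.prems by auto
  have cov: "Nq \<omega> i \<subseteq> covered M" using N_cov[OF noK] tK Suc.prems by auto
  have e1: "\<alpha> * real (card (Sq \<omega> i)) \<le> real (card (Nq \<omega> i))" using expand Sq_V hi(1) by blast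
  have s1: "card (Nq \<omega> i) \<le> 2 * card (Aq \<omega> i) + bq \<omega> i + (card (Sq \<omega> i) - card UL) + card (Failq \<omega> i) + card (Gq \<omega> i)"
    by (rule step1[OF cov])
  have s2: "card (Sq \<omega> i) + card (Aq \<omega> i) + Xq \<omega> i + card (Gq \<omega> i) \<le> card (Sq \<omega> (Suc i))" by (rule step2)
  have s3: "card (Failq \<omega> (Suc i)) + card (Gq \<omega> i) + Xq \<omega> i \<le> card (Failq \<omega> i) + bq \<omega> i" by (rule step3)
  have kS: "card UL \<le> card (Sq \<omega> i)" using UL_Sq finSq by (rule card_mono[rotated])
  have s1r: "real (card (Nq \<omega> i)) \<le> 2 * real (card (Aq \<omega> i)) + real (bq \<omega> i) + real (card (Sq \<omega> i)) + real (card (Failq \<omega> i)) + real (card (Gq \<omega> i))"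
    using s1 kS by linarith
  have s2r: "real (card (Sq \<omega> i)) + real (card (Aq \<omega> i)) + real (Xq \<omega> i) + real (card (Gq \<omega> i)) \<le> real (card (Sq \<omega> (Suc i)))"
    using s2 by linarith
  have s3r: "real (card (Failq \<omega> (Suc i))) + real (card (Gq \<omega> i)) + real (Xq \<omega> i) \<le> real (card (Failq \<omega> i)) + real (bq \<omega> i)"
    using s3 by linarith
  have hir: "real (bq \<omega> i) \<le> 4 * real (Xq \<omega> i) + 2 * real (card (Gq \<omega> i)) + 2 * real (card (Aq \<omega> i))"
    using hi(2) unfolding hq_def by linarith
  have f': "real (card (Failq \<omega> (Suc i))) \<le> 3 * real (card (Sq \<omega> (Suc i)))"
    using IH s2r s3r hir by linarith
  have g: "\<alpha> * real (card (Sq \<omega> i)) \<le> 4 * real (card (Sq \<omega> (Suc i)))"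
    using IH s2r hir e1 s1r by linarith
  have "(\<alpha>/4) ^ Suc i * real (card UL) = (\<alpha>/4) * ((\<alpha>/4) ^ i * real (card UL))" by simp
  also have "\<dots> \<le> (\<alpha>/4) * real (card (Sq \<omega> i))" using IH al by (intro mult_left_mono) auto
  also have "\<dots> \<le> real (card (Sq \<omega> (Suc i)))" using g by simp
  finally show ?case using f' by simp
qed

lemma step_tail:
  assumes noK: "\<not> (\<exists>xs. augmenting_path E M xs \<and> hd xs \<in> UL \<and> last xs \<in> UR \<and> walk_length xs \<le> K)"
  and tK: "2 * t + 1 \<le> K"
  and expand: "\<forall>S. S \<subseteq> V \<and> real (card S) \<le> \<beta> \<longrightarrow> real (card (nbhd E S)) \<ge> \<alpha> * real (card S)"
  and al: "\<alpha> \<ge> 10" and k1: "card UL \<ge> 1"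
  and it: "i < t"
  and good: "\<forall>j<i. real (card (Sq \<omega> j)) \<le> \<beta> \<and> bq \<omega> j \<le> 4 * Xq \<omega> j + hq \<omega> j"
  and sb: "real (card (Sq \<omega> i)) \<le> \<beta>"
  shows "mstep i \<le> bq \<omega> i + hq \<omega> i"
proof -
  have IH: "real (card (Failq \<omega> i)) \<le> 3 * real (card (Sq \<omega> i)) \<and> (\<alpha>/4) ^ i * real (card UL) \<le> real (card (Sq \<omega> i))"
    using inv[OF noK tK expand] al it good by auto
  have cov: "Nq \<omega> i \<subseteq> covered M" using N_cov[OF noK] tK it by auto
  have e1: "\<alpha> * real (card (Sq \<omega> i)) \<le> real (card (Nq \<omega> i))" using expand Sq_V sb by blast
  have s1: "card (Nq \<omega> i) \<le> 2 * card (Aq \<omega> i) + bq \<omega> i + (card (Sq \<omega> i) - card UL) + card (Failq \<omega> i) + card (Gq \<omega> i)"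
    by (rule step1[OF cov])
  have kS: "card UL \<le> card (Sq \<omega> i)" using UL_Sq finSq by (rule card_mono[rotated])
  have s1r: "real (card (Nq \<omega> i)) \<le> 2 * real (card (Aq \<omega> i)) + real (bq \<omega> i) + (real (card (Sq \<omega> i)) - real (card UL)) + real (card (Failq \<omega> i)) + real (card (Gq \<omega> i))"
    using s1 kS by (simp add: of_nat_diff)
  have hr: "real (hq \<omega> i) = 2 * real (card (Gq \<omega> i)) + 2 * real (card (Aq \<omega> i))" unfolding hq_def by simp
  show ?thesis
  proof (cases "i = 0")
    case True
    have "Failq \<omega> 0 = {}" unfolding Failq_def by simp
    then have "\<alpha> * real (card UL) \<le> real (bq \<omega> i) + real (hq \<omega> i)" using e1 s1r hr True by simp
    moreover have "10 \<le> \<alpha> * real (card UL)" using al k1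
      by (metis mult.commute mult_le_cancel_left1 mult_mono' of_nat_1 of_nat_le_iff order_trans zero_le_one linorder_not_less order_less_imp_le zero_le_numeral less_le_trans)
    ultimately have "10 \<le> real (bq \<omega> i + hq \<omega> i)" by simp
    then show ?thesis unfolding mstep_def using True by simp
  next
    case False
    have "real i + 1 < (5/2) ^ i" using pow52 False by simp
    also have "(5/2::real) ^ i \<le> (\<alpha>/4) ^ i" using al by (intro power_mono) auto
    also have "\<dots> \<le> (\<alpha>/4) ^ i * real (card UL)" using mult_left_mono[of 1 "real (card UL)" "(\<alpha>/4)^i"] k1 al by simp
    also have "\<dots> \<le> real (card (Sq \<omega> i))" using IH by simp
    finally have "real i + 1 < real (card (Sq \<omega> i))" .
    then have "real (i + 1) < real (card (Sq \<omega> i))" by simp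
    then have "i + 1 < card (Sq \<omega> i)" by (simp only: of_nat_less_iff)
    then have si: "real (i + 2) \<le> real (card (Sq \<omega> i))" by simp
    have "(\<alpha> - 4) * real (card (Sq \<omega> i)) \<le> real (bq \<omega> i) + real (hq \<omega> i)"
      using e1 s1r hr IH by (simp add: algebra_simps)
    moreover have "6 * real (card (Sq \<omega> i)) \<le> (\<alpha> - 4) * real (card (Sq \<omega> i))"
      using al by (intro mult_right_mono) auto
    moreover have "6 * real (i + 2) \<le> 6 * real (card (Sq \<omega> i))" using si by simp
    ultimately have "6 * real (i + 2) \<le> real (bq \<omega> i) + real (hq \<omega> i)" by (meson order.trans)
    then have "6 * real (i + 2) \<le> real (bq \<omega> i + hq \<omega> i)" by simp
    then show ?thesis unfolding mstep_def using False by (simp del: of_nat_add)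
  qed
qed

end



context actx begin

lemma lend_agree: "\<omega>' e = \<omega> e \<Longrightarrow> lend \<omega>' e = lend \<omega> e" by (simp add: lend_def)
lemma rend_agree: "\<omega>' e = \<omega> e \<Longrightarrow> rend \<omega>' e = rend \<omega> e" by (simp add: rend_def)

lemma agree_SD: "(\<forall>e\<in>Dq \<omega> i. \<omega>' e = \<omega> e) \<Longrightarrow> j \<le> i \<Longrightarrow> Sq \<omega>' j = Sq \<omega> j \<and> Dq \<omega>' j = Dq \<omega> j"
proof (induction i arbitrary: j)
  case 0 then show ?case by simp
next
  case (Suc i)
  have pre: "\<forall>e\<in>Dq \<omega> i. \<omega>' e = \<omega> e" using Suc.prems Dq_mono[of i "Suc i" \<omega>] by auto
  show ?case
  proof (cases "j \<le> i")
    case True then show ?thesis using Suc.IH[OF pre] by blast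
  next
    case False
    then have j: "j = Suc i" using Suc.prems by simp
    have SD: "Sq \<omega>' i = Sq \<omega> i" "Dq \<omega>' i = Dq \<omega> i" using Suc.IH[OF pre, of i] by auto
    let ?N = "nbhd E (Sq \<omega> i)"
    have ag: "\<omega>' e = \<omega> e" if "e \<in> M" "fst e \<in> ?N \<or> snd e \<in> ?N" for e
    proof -
      have "e \<in> Dq \<omega> (Suc i)" using that by simp
      then show ?thesis using Suc.prems(1) by blast
    qed
    have ag2: "\<omega>' e = \<omega> e" if "e \<in> M" "rend \<omega>0 e \<in> ?N" for e \<omega>0
    proof -
      have "fst e \<in> ?N \<or> snd e \<in> ?N" using that(2) rend_fs[of \<omega>0 e] by metis
      then show ?thesis using ag[OF that(1)] by blast
    qed
    have set_eq: "{e\<in>M. rend \<omega>' e \<in> ?N} = {e\<in>M. rend \<omega> e \<in> ?N}"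
    proof (intro set_eqI iffI)
      fix e assume e: "e \<in> {e\<in>M. rend \<omega>' e \<in> ?N}"
      then have "rend \<omega>' e = rend \<omega> e" using ag2[of e \<omega>'] rend_agree by simp
      then show "e \<in> {e\<in>M. rend \<omega> e \<in> ?N}" using e by simp
    next
      fix e assume e: "e \<in> {e\<in>M. rend \<omega> e \<in> ?N}"
      then have "rend \<omega>' e = rend \<omega> e" using ag2[of e \<omega>] rend_agree by simp
      then show "e \<in> {e\<in>M. rend \<omega>' e \<in> ?N}" using e by simp
    qed
    have img: "lend \<omega>' ` {e\<in>M. rend \<omega> e \<in> ?N} = lend \<omega> ` {e\<in>M. rend \<omega> e \<in> ?N}"
    proof (rule image_cong[OF refl])
      fix e assume e: "e \<in> {e\<in>M. rend \<omega> e \<in> ?N}"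
      then have "\<omega>' e = \<omega> e" using ag2[of e \<omega>] by simp
      then show "lend \<omega>' e = lend \<omega> e" by (rule lend_agree)
    qed
    show ?thesis unfolding j using SD set_eq img by simp
  qed
qed

lemma agree_all:
  assumes ag: "\<forall>e\<in>Dq \<omega> i. \<omega>' e = \<omega> e" and ji: "j \<le> i"
  shows "Sq \<omega>' j = Sq \<omega> j" "Dq \<omega>' j = Dq \<omega> j" "Bq \<omega>' j = Bq \<omega> j" "cq \<omega>' j = cq \<omega> j"
    "hq \<omega>' j = hq \<omega> j" "bq \<omega>' j = bq \<omega> j"
proof -
  have SD: "Sq \<omega>' j = Sq \<omega> j" "Dq \<omega>' j = Dq \<omega> j" using agree_SD[OF ag ji] by auto
  have agj: "\<forall>e\<in>Dq \<omega> j. \<omega>' e = \<omega> e" using ag Dq_mono[OF ji, of \<omega>] by auto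
  have F: "Fq \<omega>' j = Fq \<omega> j" unfolding Fq_def SD ..
  show "Sq \<omega>' j = Sq \<omega> j" "Dq \<omega>' j = Dq \<omega> j" by (rule SD)+
  show B: "Bq \<omega>' j = Bq \<omega> j" unfolding Bq_def F SD ..
  show "cq \<omega>' j = cq \<omega> j" unfolding cq_def SD ..
  have A: "Aq \<omega>' j = Aq \<omega> j" unfolding Aq_def F SD ..
  have Fl: "Failq \<omega>' j = Failq \<omega> j" unfolding Failq_def SD
  proof (rule Collect_cong)
    fix e show "(e \<in> Dq \<omega> j \<and> lend \<omega>' e \<notin> Sq \<omega> j) = (e \<in> Dq \<omega> j \<and> lend \<omega> e \<notin> Sq \<omega> j)"
    proof (cases "e \<in> Dq \<omega> j")
      case True then have "lend \<omega>' e = lend \<omega> e" using agj by (intro lend_agree) blast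
      then show ?thesis by simp
    qed simp
  qed
  have Gl: "Gq \<omega>' j = Gq \<omega> j" unfolding Gq_def Fl SD
  proof (rule Collect_cong)
    fix e show "(e \<in> Failq \<omega> j \<and> rend \<omega>' e \<in> Nq \<omega> j) = (e \<in> Failq \<omega> j \<and> rend \<omega> e \<in> Nq \<omega> j)"
    proof (cases "e \<in> Failq \<omega> j")
      case True then have "e \<in> Dq \<omega> j" using Fail_D by blast
      then have "rend \<omega>' e = rend \<omega> e" using agj by (intro rend_agree) blast
      then show ?thesis by simp
    qed simp
  qed
  show "hq \<omega>' j = hq \<omega> j" unfolding hq_def A Gl ..
  show "bq \<omega>' j = bq \<omega> j" unfolding bq_def B ..
qed

lemma F_Dsuc: "Fq \<omega> j \<subseteq> Dq \<omega> (Suc j)" unfolding Fq_def by auto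

lemma agree_X:
  assumes ag: "\<forall>e\<in>Dq \<omega> i. \<omega>' e = \<omega> e" and ji: "j < i"
  shows "Xq \<omega>' j = Xq \<omega> j"
proof -
  have B: "Bq \<omega>' j = Bq \<omega> j" and c: "cq \<omega>' j = cq \<omega> j" using agree_all[OF ag less_imp_le[OF ji]] by auto
  have "Bq \<omega> j \<subseteq> Dq \<omega> i" using Bq_F[of \<omega> j] F_Dsuc[of \<omega> j] Dq_mono[of "Suc j" i \<omega>] ji by auto
  then have "Bg \<omega>' j = Bg \<omega> j" unfolding Bg_def B c
  proof (intro Collect_cong)
    fix e assume sub: "Bq \<omega> j \<subseteq> Dq \<omega> i"
    show "(e \<in> Bq \<omega> j \<and> \<omega>' e = cq \<omega> j e) = (e \<in> Bq \<omega> j \<and> \<omega> e = cq \<omega> j e)"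
    proof (cases "e \<in> Bq \<omega> j")
      case True then have "\<omega>' e = \<omega> e" using sub ag by blast
      then show ?thesis by simp
    qed simp
  qed
  then show ?thesis unfolding Xq_def by simp
qed

definition goodq where "goodq \<beta> \<omega> j \<longleftrightarrow> \<beta> < real (card (Sq \<omega> j)) \<or> bq \<omega> j \<le> 4 * Xq \<omega> j + hq \<omega> j"
definition Qq where "Qq \<beta> i \<omega> \<longleftrightarrow> (\<forall>j<i. goodq \<beta> \<omega> j) \<and> real (card (Sq \<omega> i)) \<le> \<beta>"

lemma Q_good:
  assumes "Qq \<beta> i \<omega>"
  shows "\<forall>j<i. real (card (Sq \<omega> j)) \<le> \<beta> \<and> bq \<omega> j \<le> 4 * Xq \<omega> j + hq \<omega> j"
proof (intro allI impI)
  fix j assume j: "j < i"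
  have "card (Sq \<omega> j) \<le> card (Sq \<omega> i)" using Sq_mono[of j i \<omega>] j finSq by (intro card_mono) auto
  then have "real (card (Sq \<omega> j)) \<le> \<beta>" using assms unfolding Qq_def by (meson of_nat_le_iff order_trans)
  then show "real (card (Sq \<omega> j)) \<le> \<beta> \<and> bq \<omega> j \<le> 4 * Xq \<omega> j + hq \<omega> j"
    using assms j unfolding Qq_def goodq_def by auto
qed

lemma bad_bound:
  assumes noK: "\<not> (\<exists>xs. augmenting_path E M xs \<and> hd xs \<in> UL \<and> last xs \<in> UR \<and> walk_length xs \<le> K)"
  and tK: "2 * t + 1 \<le> K"
  and expand: "\<forall>S. S \<subseteq> V \<and> real (card S) \<le> \<beta> \<longrightarrow> real (card (nbhd E S)) \<ge> \<alpha> * real (card S)"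
  and al: "\<alpha> \<ge> 10" and k1: "card UL \<ge> 1"
  and it: "i < t"
  shows "real (card {\<omega>\<in>M \<rightarrow>\<^sub>E (UNIV::bool set). Qq \<beta> i \<omega> \<and> 4 * card {e\<in>Bq \<omega> i. \<omega> e = cq \<omega> i e} + hq \<omega> i < card (Bq \<omega> i)})
     \<le> (337/384) ^ mstep i * card (M \<rightarrow>\<^sub>E (UNIV::bool set))"
proof (rule exposure[where D="\<lambda>\<omega>. Dq \<omega> i" and B="\<lambda>\<omega>. Bq \<omega> i" and c="\<lambda>\<omega>. cq \<omega> i"
      and P="\<lambda>\<omega> j. 4 * j + hq \<omega> i < card (Bq \<omega> i)" and Q="Qq \<beta> i", OF finM])
  show "Bq \<omega> i \<subseteq> M \<and> Bq \<omega> i \<inter> Dq \<omega> i = {}" for \<omega> using Bq_D by blast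
  show "(337/384::real) ^ mstep i \<ge> 0" by simp
next
  fix \<omega> \<omega>' assume ag: "\<forall>e\<in>Dq \<omega> i. \<omega>' e = \<omega> e"
  have eqs: "Sq \<omega>' i = Sq \<omega> i" "Dq \<omega>' i = Dq \<omega> i" "Bq \<omega>' i = Bq \<omega> i" "cq \<omega>' i = cq \<omega> i" "hq \<omega>' i = hq \<omega> i"
    using agree_all[OF ag order.refl] by auto
  have gj: "goodq \<beta> \<omega>' j = goodq \<beta> \<omega> j" if "j < i" for j
    using agree_all[OF ag, of j] agree_X[OF ag, of j] that unfolding goodq_def by auto
  have "Qq \<beta> i \<omega>' = Qq \<beta> i \<omega>" unfolding Qq_def using gj eqs by auto
  then show "Dq \<omega>' i = Dq \<omega> i \<and> Bq \<omega>' i = Bq \<omega> i \<and> cq \<omega>' i = cq \<omega> i \<and>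
      (\<lambda>j. 4 * j + hq \<omega>' i < card (Bq \<omega>' i)) = (\<lambda>j. 4 * j + hq \<omega> i < card (Bq \<omega> i)) \<and> Qq \<beta> i \<omega>' = Qq \<beta> i \<omega>"
    using eqs by simp
next
  fix \<omega> assume Q: "Qq \<beta> i \<omega>"
  have m: "mstep i \<le> bq \<omega> i + hq \<omega> i"
    using step_tail[OF noK tK expand al k1 it Q_good[OF Q]] Q unfolding Qq_def by blast
  have "real (card {T. T \<subseteq> Bq \<omega> i \<and> 4 * card T + hq \<omega> i < card (Bq \<omega> i)}) \<le> (337/384) ^ (card (Bq \<omega> i) + hq \<omega> i) * 2 ^ card (Bq \<omega> i)"
    by (rule tail_bound[OF finB])
  also have "\<dots> \<le> (337/384) ^ mstep i * 2 ^ card (Bq \<omega> i)"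
    using m unfolding bq_def by (intro mult_right_mono power_decreasing) auto
  finally show "real (card {T. T \<subseteq> Bq \<omega> i \<and> 4 * card T + hq \<omega> i < card (Bq \<omega> i)}) \<le> (337/384) ^ mstep i * 2 ^ card (Bq \<omega> i)" .
qed

end



lemma psum: "(\<Sum>i<t. (337/384::real) ^ mstep i) < 1/2"
proof -
  define r :: real where "r = 337/384"
  define q where "q = r ^ 6"
  have q1: "q < 1" "0 \<le> q" unfolding q_def r_def by (simp_all add: power_less_one_iff)
  have key: "(\<Sum>i<Suc t. r ^ mstep i) \<le> r ^ 10 + (q ^ 3 - q ^ (t + 3)) / (1 - q)" for t
  proof (induction t)
    case 0 then show ?case by (simp add: mstep_def)
  next
    case (Suc t)
    have "r ^ mstep (Suc t) = q ^ (t + 3)" unfolding mstep_def q_def by (simp add: power_mult[symmetric] algebra_simps)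
    moreover have "(q ^ 3 - q ^ (t + 3)) / (1 - q) + q ^ (t + 3) = (q ^ 3 - q ^ (Suc t + 3)) / (1 - q)"
    proof -
      have e: "q ^ (Suc t + 3) = q * q ^ (t + 3)" by (simp only: add_Suc power_Suc)
      show ?thesis unfolding e using q1 by (simp add: field_simps)
    qed
    ultimately show ?case using Suc by simp
  qed
  have "(\<Sum>i<t. r ^ mstep i) \<le> r ^ 10 + q ^ 3 / (1 - q)"
  proof (cases t)
    case 0 then show ?thesis using q1 unfolding r_def by simp
  next
    case (Suc t')
    have "(\<Sum>i<t. r ^ mstep i) \<le> r ^ 10 + (q ^ 3 - q ^ (t' + 3)) / (1 - q)" using key[of t'] Suc by simp
    also have "\<dots> \<le> r ^ 10 + q ^ 3 / (1 - q)" using q1 by (simp add: divide_right_mono)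
    finally show ?thesis .
  qed
  also have "\<dots> < 1/2" unfolding q_def r_def by (simp add: power_divide)
  finally show ?thesis unfolding r_def .
qed

context actx begin

lemma main_count:
  assumes noK: "\<not> (\<exists>xs. augmenting_path E M xs \<and> hd xs \<in> UL \<and> last xs \<in> UR \<and> walk_length xs \<le> 4 * t + 1)"
  and expand: "\<forall>S. S \<subseteq> V \<and> real (card S) \<le> \<beta> \<longrightarrow> real (card (nbhd E S)) \<ge> \<alpha> * real (card S)"
  and al: "\<alpha> \<ge> 10" and k1: "card UL \<ge> 1"
  and tbig: "\<beta> + 1 \<le> (\<alpha>/4) ^ t * real (card UL)"
  shows "real (card ((M \<rightarrow>\<^sub>E (UNIV::bool set)) - {\<omega>. \<exists>S \<subseteq> L_M UL M \<omega>. real (card S) > \<beta> \<and>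
              (\<forall>v\<in>S. \<exists>xs. path_in (E_M E UL UR M \<omega>) xs \<and> alternating M xs \<and>
                  hd xs \<in> UL \<and> last xs = v \<and> walk_length xs \<le> 2 * t)}))
     \<le> (\<Sum>i<t. (337/384::real) ^ mstep i) * card (M \<rightarrow>\<^sub>E (UNIV::bool set))"
proof -
  define \<Omega> where "\<Omega> = M \<rightarrow>\<^sub>E (UNIV::bool set)"
  define T where "T = {\<omega>. \<exists>S \<subseteq> L_M UL M \<omega>. real (card S) > \<beta> \<and>
              (\<forall>v\<in>S. \<exists>xs. path_in (E_M E UL UR M \<omega>) xs \<and> alternating M xs \<and>
                  hd xs \<in> UL \<and> last xs = v \<and> walk_length xs \<le> 2 * t)}"
  define Bad where "Bad i = {\<omega>\<in>\<Omega>. Qq \<beta> i \<omega> \<and> 4 * card {e\<in>Bq \<omega> i. \<omega> e = cq \<omega> i e} + hq \<omega> i < card (Bq \<omega> i)}" for i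
  have tK: "2 * t + 1 \<le> 4 * t + 1" by simp
  have finO: "finite \<Omega>" unfolding \<Omega>_def by (rule finite_PiE[OF finM]) simp
  have cover: "\<Omega> - T \<subseteq> (\<Union>i\<in>{..<t}. Bad i)"
  proof
    fix \<omega> assume o: "\<omega> \<in> \<Omega> - T"
    show "\<omega> \<in> (\<Union>i\<in>{..<t}. Bad i)"
    proof (rule ccontr)
      assume nb: "\<omega> \<notin> (\<Union>i\<in>{..<t}. Bad i)"
      have allgood: "i < t \<longrightarrow> goodq \<beta> \<omega> i" for i
      proof (induction i rule: less_induct)
        case (less i)
        show ?case
        proof
          assume it: "i < t"
          have prev: "\<forall>j<i. goodq \<beta> \<omega> j" using less.IH it by auto
          show "goodq \<beta> \<omega> i"
          proof (rule ccontr)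
            assume ng: "\<not> goodq \<beta> \<omega> i"
            then have "Qq \<beta> i \<omega>" using prev unfolding Qq_def goodq_def by auto
            moreover have "4 * card {e\<in>Bq \<omega> i. \<omega> e = cq \<omega> i e} + hq \<omega> i < card (Bq \<omega> i)"
              using ng unfolding goodq_def Xq_def Bg_def bq_def by auto
            ultimately have "\<omega> \<in> Bad i" using o unfolding Bad_def by auto
            then show False using nb it by auto
          qed
        qed
      qed
      show False
      proof (cases "\<exists>j\<le>t. \<beta> < real (card (Sq \<omega> j))")
        case True
        then obtain j where j: "j \<le> t" "\<beta> < real (card (Sq \<omega> j))" by blast
        have "\<omega> \<in> T" unfolding T_def
        proof (intro CollectI exI[of _ "Sq \<omega> j"] conjI ballI)
          show "Sq \<omega> j \<subseteq> L_M UL M \<omega>" unfolding LM by (rule Sq_L)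
          show "\<beta> < real (card (Sq \<omega> j))" by (rule j(2))
          fix v assume "v \<in> Sq \<omega> j"
          then obtain xs where pp: "pathprop \<omega> j v xs" using paths by blast
          have "walk_length xs \<le> 2 * t" using pp j(1) unfolding pathprop_def by linarith
          then show "\<exists>xs. path_in (E_M E UL UR M \<omega>) xs \<and> alternating M xs \<and> hd xs \<in> UL \<and> last xs = v \<and> walk_length xs \<le> 2 * t"
            using pp unfolding pathprop_def by blast
        qed
        then show False using o by simp
      next
        case False
        then have sb: "\<forall>j\<le>t. real (card (Sq \<omega> j)) \<le> \<beta>" by (auto simp: not_less)
        have "\<forall>j<t. real (card (Sq \<omega> j)) \<le> \<beta> \<and> bq \<omega> j \<le> 4 * Xq \<omega> j + hq \<omega> j"
        proof (intro allI impI)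
          fix j assume j: "j < t"
          then have sj: "real (card (Sq \<omega> j)) \<le> \<beta>" using sb by simp
          moreover have "goodq \<beta> \<omega> j" using allgood j by simp
          ultimately show "real (card (Sq \<omega> j)) \<le> \<beta> \<and> bq \<omega> j \<le> 4 * Xq \<omega> j + hq \<omega> j"
            unfolding goodq_def by auto
        qed
        then have "(\<alpha>/4) ^ t * real (card UL) \<le> real (card (Sq \<omega> t))"
          using inv[OF noK tK expand, of t \<omega>] al by auto
        then show False using sb tbig by (meson add_le_same_cancel1 not_one_le_zero order.trans order_refl)
      qed
    qed
  qed
  have "card (\<Omega> - T) \<le> card (\<Union>i\<in>{..<t}. Bad i)"
    by (rule card_mono[OF _ cover]) (auto simp: Bad_def finO)
  also have "\<dots> \<le> (\<Sum>i<t. card (Bad i))" by (rule card_UN_le) simp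
  finally have "real (card (\<Omega> - T)) \<le> (\<Sum>i<t. real (card (Bad i)))" by (metis of_nat_le_iff of_nat_sum)
  also have "\<dots> \<le> (\<Sum>i<t. (337/384::real) ^ mstep i * card \<Omega>)"
  proof (rule sum_mono)
    fix i assume "i \<in> {..<t}"
    then have it: "i < t" by simp
    show "real (card (Bad i)) \<le> (337/384::real) ^ mstep i * card \<Omega>"
      unfolding Bad_def \<Omega>_def by (rule bad_bound[OF noK tK expand al k1 it])
  qed
  also have "\<dots> = (\<Sum>i<t. (337/384::real) ^ mstep i) * card \<Omega>" by (simp add: sum_distrib_right)
  finally show ?thesis unfolding \<Omega>_def T_def .
qed

end



theorem lemma3p3:
  fixes V :: "'a set" and E :: "'a \<Rightarrow> 'a \<Rightarrow> bool" and n :: nat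
    and \<epsilon> \<alpha> :: real and M :: "('a \<times> 'a) set" and UL UR :: "'a set"
  assumes G: "graph V E" and cardV: "card V = 2 * n"
    and eps: "0 < \<epsilon>" "\<epsilon> < 1" and alpha: "\<alpha> \<ge> 10"
    and expand: "\<forall>S. S \<subseteq> V \<and> real (card S) \<le> 2 * \<epsilon> * n
                   \<longrightarrow> real (card (nbhd E S)) \<ge> \<alpha> * real (card S)"
    and M: "matching E M" and notperfect: "V - covered M \<noteq> {}"
    and part: "UL \<union> UR = V - covered M" "UL \<inter> UR = {}" "card UL = card UR"
    and noaug: "\<not> (\<exists>xs. augmenting_path E M xs \<and> hd xs \<in> UL \<and> last xs \<in> UR
          \<and> walk_length xs \<le> 4 * nat (ceiling (log (\<alpha> / 4) ((2 * \<epsilon> * n + 1) / real (card UL)))) + 1)"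
  shows "measure_pmf.prob (mu_M M)
           {\<omega>. \<exists>S \<subseteq> L_M UL M \<omega>. real (card S) > 2 * \<epsilon> * n \<and>
              (\<forall>v\<in>S. \<exists>xs. path_in (E_M E UL UR M \<omega>) xs \<and> alternating M xs \<and>
                  hd xs \<in> UL \<and> last xs = v \<and>
                  walk_length xs \<le> 2 * nat (ceiling (log (\<alpha> / 4) ((2 * \<epsilon> * n + 1) / real (card UL)))))}
         > 1 / 2"
proof -
  interpret actx V E M UL UR by unfold_locales (use G M part in auto)
  have finUR: "finite UR" using UR_V finV finite_subset by blast
  have k1: "card UL \<ge> 1"
  proof (rule ccontr)
    assume "\<not> 1 \<le> card UL"
    then have "card UL = 0" by simp
    then have "UL = {}" "UR = {}" using finUL finUR part(3) by auto
    then show False using notperfect part(1) by auto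
  qed
  define t where "t = nat \<lceil>log (\<alpha> / 4) ((2 * \<epsilon> * real n + 1) / real (card UL))\<rceil>"
  define \<beta> where "\<beta> = 2 * \<epsilon> * real n"
  have b0: "0 \<le> \<beta>" unfolding \<beta>_def using eps by simp
  have tbig: "\<beta> + 1 \<le> (\<alpha>/4) ^ t * real (card UL)"
  proof -
    define x where "x = (\<beta> + 1) / real (card UL)"
    have kp: "0 < real (card UL)" using k1 by simp
    have xp: "0 < x" unfolding x_def using b0 kp by simp
    have a1: "1 < \<alpha> / 4" using alpha by simp
    have "log (\<alpha>/4) x \<le> real t" unfolding t_def x_def \<beta>_def by (rule real_nat_ceiling_ge)
    then have "(\<alpha>/4) powr (log (\<alpha>/4) x) \<le> (\<alpha>/4) powr real t" using a1 by (intro powr_mono) auto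
    then have "x \<le> (\<alpha>/4) ^ t" using a1 xp by (simp add: powr_realpow)
    then have "x * real (card UL) \<le> (\<alpha>/4) ^ t * real (card UL)" using kp by (intro mult_right_mono) auto
    then show ?thesis unfolding x_def using kp by simp
  qed
  have noK: "\<not> (\<exists>xs. augmenting_path E M xs \<and> hd xs \<in> UL \<and> last xs \<in> UR \<and> walk_length xs \<le> 4 * t + 1)"
    using noaug unfolding t_def by simp
  have exp2: "\<forall>S. S \<subseteq> V \<and> real (card S) \<le> \<beta> \<longrightarrow> real (card (nbhd E S)) \<ge> \<alpha> * real (card S)"
    using expand unfolding \<beta>_def by simp
  define \<Omega> where "\<Omega> = M \<rightarrow>\<^sub>E (UNIV::bool set)"
  define T where "T = {\<omega>. \<exists>S \<subseteq> L_M UL M \<omega>. real (card S) > \<beta> \<and>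
              (\<forall>v\<in>S. \<exists>xs. path_in (E_M E UL UR M \<omega>) xs \<and> alternating M xs \<and>
                  hd xs \<in> UL \<and> last xs = v \<and> walk_length xs \<le> 2 * t)}"
  have finO: "finite \<Omega>" unfolding \<Omega>_def by (rule finite_PiE[OF finM]) simp
  have neO: "\<Omega> \<noteq> {}" unfolding \<Omega>_def by (simp add: PiE_eq_empty_iff)
  have cO: "0 < real (card \<Omega>)" using finO neO by (simp add: card_gt_0_iff)
  have mc: "real (card (\<Omega> - T)) \<le> (\<Sum>i<t. (337/384::real) ^ mstep i) * card \<Omega>"
    unfolding \<Omega>_def T_def by (rule main_count[OF noK exp2 alpha k1 tbig])
  also have "\<dots> < 1/2 * card \<Omega>" using psum[of t] cO by (intro mult_strict_right_mono) auto
  finally have lt: "real (card (\<Omega> - T)) < 1/2 * card \<Omega>" .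
  have "card \<Omega> = card (\<Omega> \<inter> T) + card (\<Omega> - T)" using card_Int_Diff[OF finO] .
  then have "real (card \<Omega>) = real (card (\<Omega> \<inter> T)) + real (card (\<Omega> - T))" by simp
  then have gt: "1/2 * real (card \<Omega>) < real (card (\<Omega> \<inter> T))" using lt by linarith
  have "measure_pmf.prob (mu_M M) T = real (card (\<Omega> \<inter> T)) / card \<Omega>"
    unfolding mu_M_def \<Omega>_def[symmetric] by (rule measure_pmf_of_set[OF neO finO])
  also have "\<dots> > 1/2" using gt cO by (simp add: field_simps)
  finally have "measure_pmf.prob (mu_M M) T > 1/2" .
  then show ?thesis unfolding T_def t_def \<beta>_def .
qed


end
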